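(* Consider the contextual bilateral trade problem in the one-bit feedback model. There exists a profit-maximizing algorithm that achieves regret $O(d\,6^d\log T)$ and enforces per-round budget balance.
   Context: Contextual bilateral trade: Let $\mathbb{B}=\{w\in\mathbb{R}^d:\|w\|_2\le 1\}$. There are two fixed vectors $s,b\in\mathbb{B}$ unknown to the learner. At each time $t=1,\dots,T$, the learner observes a context $x_t\in\mathbb{B}$ (the contexts and $s,b$ are fixed in advance by an oblivious adversary; this is an instance), and posts a price $p_t$ to the seller and $q_t$ to the buyer. Valuations: $s_t=\langle s,x_t\rangle$, $b_t=\langle b,x_t\rangle$; the trade happens iff $s_t\le p_t$ and $q_t\le b_t$. Profit: $\mathrm{Profit}_t(p_t,q_t)=(q_t-p_t)\,\mathbb{1}\{s_t\le p_t\}\mathbb{1}\{q_t\le b_t\}$. One-bit feedback: after each round the learner observes only $\mathbb{1}\{s_t\le p_t\}\cdot\mathbb{1}\{q_t\le b_t\}$. Regret of a (possibly randomized) algorithm $\mathcal{A}$: $R_T(\mathcal{A})=\sup_{\mathcal{I}}\mathbb{E}\big[\sum_{t=1}^T (b_t-s_t)_+-\sum_{t=1}^T\mathrm{Profit}_t(p_t,q_t)\big]$, expectation over the algorithm's randomness. Per-round budget balance: $p_t\le q_t$ for every $t$. The $O(\cdot)$ hides absolute constants independent of $d$ and $T$. *)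

theory Defs
  imports "HOL-Probability.Probability"
begin

text \<open>Vectors of R^d are represented as functions nat => real vanishing outside {..<d}.\<close>
type_synonym vec = "nat \<Rightarrow> real"

definition unit_ball :: "nat \<Rightarrow> vec set" where
  "unit_ball d = {w. (\<forall>i\<ge>d. w i = 0) \<and> (\<Sum>i<d. (w i)\<^sup>2) \<le> 1}"

definition ip :: "nat \<Rightarrow> vec \<Rightarrow> vec \<Rightarrow> real" where
  "ip d u v = (\<Sum>i<d. u i * v i)"

text \<open>A history entry: (context, seller price p, buyer price q, one-bit feedback).\<close>
type_synonym hist = "(vec \<times> real \<times> real \<times> bool) list"

type_synonym learner = "hist \<Rightarrow> vec \<Rightarrow> (real \<times> real) pmf"

definition budget_balanced :: "learner \<Rightarrow> bool" where
  "budget_balanced A \<longleftrightarrow> (\<forall>h x p q. (p, q) \<in> set_pmf (A h x) \<longrightarrow> p \<le> q)"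

text \<open>Distribution of the history after t rounds (rounds indexed 0, ..., t-1),
  against the oblivious instance (s, b, x).\<close>
primrec run :: "nat \<Rightarrow> learner \<Rightarrow> vec \<Rightarrow> vec \<Rightarrow> (nat \<Rightarrow> vec) \<Rightarrow> nat \<Rightarrow> hist pmf" where
  "run d A s b x 0 = return_pmf []"
| "run d A s b x (Suc t) =
     do { h \<leftarrow> run d A s b x t;
          pq \<leftarrow> A h (x t);
          return_pmf (h @ [(x t, fst pq, snd pq,
                            ip d s (x t) \<le> fst pq \<and> snd pq \<le> ip d b (x t))]) }"

text \<open>Realized profit of a history: (q - p) on rounds where the trade happened
  (the feedback bit equals the trade indicator).\<close>
definition hist_profit :: "hist \<Rightarrow> real" where
  "hist_profit h = (\<Sum>(x, p, q, f) \<leftarrow> h. if f then q - p else 0)"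

definition regret :: "nat \<Rightarrow> learner \<Rightarrow> vec \<Rightarrow> vec \<Rightarrow> (nat \<Rightarrow> vec) \<Rightarrow> nat \<Rightarrow> real" where
  "regret d A s b x T =
     (\<Sum>t<T. max 0 (ip d b (x t) - ip d s (x t)))
     - measure_pmf.expectation (run d A s b x T) hist_profit"

end

theory Submission
  imports Defs "HOL-Analysis.Harmonic_Numbers"
begin

abbreviation "LB d \<equiv> PiM {..<d} (\<lambda>_::nat. (lborel::real measure))"

interpretation lbprod: product_sigma_finite "\<lambda>_::nat. (lborel::real measure)"
  by standard

lemma affine_pre_1d:
  fixes A :: "real set" and c l :: real
  assumes "l > 0" "A \<in> sets borel"
  shows "emeasure lborel {y. (y - c) / l \<in> A} = ennreal l * emeasure lborel A"
proof -
  have "emeasure lborel A = emeasure (density (distr lborel borel (\<lambda>x. (- c / l) + (1/l) * x)) (\<lambda>_. ennreal \<bar>1/l\<bar>)) A"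
    using lborel_real_affine[of "1/l" "- c / l"] assms(1) by simp
  also have "\<dots> = ennreal (1/l) * emeasure lborel ((\<lambda>x. (- c / l) + (1/l) * x) -` A)"
    using assms by (simp add: emeasure_density_const emeasure_distr)
  also have "(\<lambda>x. (- c / l) + (1/l) * x) -` A = {y. (y - c) / l \<in> A}"
    by (auto simp: diff_divide_distrib)
  finally have "emeasure lborel A = ennreal (1/l) * emeasure lborel {y. (y - c) / l \<in> A}" .
  then have "ennreal l * emeasure lborel A = ennreal l * ennreal (1/l) * emeasure lborel {y. (y - c) / l \<in> A}"
    by (simp add: mult.assoc)
  also have "ennreal l * ennreal (1/l) = 1" using assms(1)
    by (simp add: ennreal_mult[symmetric])
  finally show ?thesis by simp
qed

definition hinv :: "nat \<Rightarrow> (nat \<Rightarrow> real) \<Rightarrow> real \<Rightarrow> (nat \<Rightarrow> real) \<Rightarrow> (nat \<Rightarrow> real)" where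
  "hinv d c l g = (\<lambda>i\<in>{..<d}. (g i - c i) / l)"

lemma hinv_meas: "hinv d c l \<in> measurable (LB d) (LB d)"
  unfolding hinv_def by measurable

lemma distr_hinv:
  assumes "l > 0"
  shows "density (distr (LB d) (LB d) (hinv d c l)) (\<lambda>_. ennreal (1 / l ^ d)) = LB d"
proof (rule lbprod.PiM_eqI)
  show "finite {..<d}" by simp
  show "sets (density (distr (LB d) (LB d) (hinv d c l)) (\<lambda>_. ennreal (1 / l ^ d))) = sets (LB d)"
    by simp
  fix A :: "nat \<Rightarrow> real set" assume A: "\<And>i. i \<in> {..<d} \<Longrightarrow> A i \<in> sets lborel"
  have box: "Pi\<^sub>E {..<d} A \<in> sets (LB d)" using A by (simp add: sets_PiM_I_finite)
  have pre: "hinv d c l -` Pi\<^sub>E {..<d} A \<inter> space (LB d) = Pi\<^sub>E {..<d} (\<lambda>i. {y. (y - c i) / l \<in> A i})"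
    by (auto simp: hinv_def space_PiM PiE_def Pi_def extensional_def)
  have "emeasure (density (distr (LB d) (LB d) (hinv d c l)) (\<lambda>_. ennreal (1 / l ^ d))) (Pi\<^sub>E {..<d} A)
      = ennreal (1 / l ^ d) * emeasure (LB d) (Pi\<^sub>E {..<d} (\<lambda>i. {y. (y - c i) / l \<in> A i}))"
    using box by (simp add: emeasure_density_const emeasure_distr hinv_meas pre)
  also have "emeasure (LB d) (Pi\<^sub>E {..<d} (\<lambda>i. {y. (y - c i) / l \<in> A i}))
      = (\<Prod>i<d. ennreal l * emeasure lborel (A i))"
  proof -
    have m: "\<And>i. i < d \<Longrightarrow> {y. (y - c i) / l \<in> A i} \<in> sets lborel"
    proof -
      fix i assume "i < d"
      then have "A i \<in> sets borel" using A by simp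
      then show "{y. (y - c i) / l \<in> A i} \<in> sets lborel" by measurable
    qed
    then show ?thesis
      using A assms by (subst lbprod.emeasure_PiM) (auto intro!: prod.cong affine_pre_1d)
  qed
  also have "(\<Prod>i<d. ennreal l * emeasure lborel (A i)) = ennreal (l ^ d) * (\<Prod>i<d. emeasure lborel (A i))"
    using assms by (simp add: prod.distrib ennreal_power)
  also have "ennreal (1 / l ^ d) * (ennreal (l ^ d) * (\<Prod>i<d. emeasure lborel (A i))) = (\<Prod>i<d. emeasure lborel (A i))"
    using assms by (simp add: mult.assoc[symmetric] ennreal_mult[symmetric])
  finally show "emeasure (density (distr (LB d) (LB d) (hinv d c l)) (\<lambda>_. ennreal (1 / l ^ d))) (Pi\<^sub>E {..<d} A) = (\<Prod>i\<in>{..<d}. emeasure lborel (A i))"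
    by simp
qed

lemma emeasure_hinv:
  assumes "l > 0" "S \<in> sets (LB d)"
  shows "emeasure (LB d) (hinv d c l -` S \<inter> space (LB d)) = ennreal (l ^ d) * emeasure (LB d) S"
proof -
  have "emeasure (LB d) S = emeasure (density (distr (LB d) (LB d) (hinv d c l)) (\<lambda>_. ennreal (1 / l ^ d))) S"
    using distr_hinv[OF assms(1), of d c] by simp
  also have "\<dots> = ennreal (1 / l ^ d) * emeasure (LB d) (hinv d c l -` S \<inter> space (LB d))"
    using assms by (simp add: emeasure_density_const emeasure_distr hinv_meas)
  finally have "ennreal (l ^ d) * emeasure (LB d) S = ennreal (l ^ d) * ennreal (1 / l ^ d) * emeasure (LB d) (hinv d c l -` S \<inter> space (LB d))"
    by (simp add: mult.assoc)
  also have "ennreal (l ^ d) * ennreal (1 / l ^ d) = 1"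
    using assms(1) by (simp add: ennreal_mult[symmetric])
  finally show ?thesis by simp
qed

type_synonym obs = "vec \<times> real \<times> bool"

definition rr :: "nat \<Rightarrow> real" where "rr t = 1 / (16 * (real t + 1))"
definition eps :: "nat \<Rightarrow> real" where "eps t = 1 / (real t + 1)"

definition KS :: "nat \<Rightarrow> nat \<Rightarrow> obs list \<Rightarrow> (nat \<Rightarrow> real) set" where
  "KS d t F = {f \<in> space (LB d). (\<forall>i\<in>{..<d}. \<bar>f i\<bar> \<le> 1 + rr t / real d) \<and>
     (\<forall>ob\<in>set F. (if snd (snd ob) then ip d f (fst ob) \<le> fst (snd ob) + rr t
                  else fst (snd ob) - rr t \<le> ip d f (fst ob)))}"

lemma ip_meas[measurable]: "(\<lambda>f. ip d f x) \<in> borel_measurable (LB d)"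
  unfolding ip_def by measurable

lemma sets_space_INT:
  assumes "finite I" "\<And>i. i \<in> I \<Longrightarrow> X i \<in> sets M"
  shows "space M \<inter> (\<Inter>i\<in>I. X i) \<in> sets M"
proof (cases "I = {}")
  case True then show ?thesis by simp
next
  case False
  then show ?thesis using assms by (intro sets.Int sets.finite_INT) auto
qed

lemma KS_sets: "KS d t F \<in> sets (LB d)"
proof -
  have "KS d t F = (space (LB d) \<inter> (\<Inter>i\<in>{..<d}. {f \<in> space (LB d). \<bar>f i\<bar> \<le> 1 + rr t / real d}))
      \<inter> (space (LB d) \<inter> (\<Inter>ob\<in>set F. {f \<in> space (LB d). (if snd (snd ob) then ip d f (fst ob) \<le> fst (snd ob) + rr t
                  else fst (snd ob) - rr t \<le> ip d f (fst ob))}))"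
    unfolding KS_def by auto
  also have "\<dots> \<in> sets (LB d)"
    by (intro sets.Int sets_space_INT) auto
  finally show ?thesis .
qed

lemma rr_pos: "rr t > 0" by (simp add: rr_def)
lemma rr_anti: "t \<le> t' \<Longrightarrow> rr t' \<le> rr t"
  by (simp add: rr_def frac_le)

lemma KS_mono:
  assumes "t \<le> t'" "set F \<subseteq> set F'"
  shows "KS d t' F' \<subseteq> KS d t F"
proof
  fix f assume f: "f \<in> KS d t' F'"
  have r: "rr t' \<le> rr t" using rr_anti[OF assms(1)] .
  have r2: "rr t' / real d \<le> rr t / real d" using r by (simp add: divide_right_mono)
  show "f \<in> KS d t F"
  proof -
    have "\<forall>i\<in>{..<d}. \<bar>f i\<bar> \<le> 1 + rr t / real d"
      proof
      fix i assume "i \<in> {..<d}"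
      then have "\<bar>f i\<bar> \<le> 1 + rr t' / real d" using f unfolding KS_def by auto
      then show "\<bar>f i\<bar> \<le> 1 + rr t / real d" using r2 by linarith
    qed
    moreover have "\<forall>ob\<in>set F. (if snd (snd ob) then ip d f (fst ob) \<le> fst (snd ob) + rr t
                  else fst (snd ob) - rr t \<le> ip d f (fst ob))"
    proof
      fix ob assume "ob \<in> set F"
      then have "ob \<in> set F'" using assms(2) by auto
      then have "(if snd (snd ob) then ip d f (fst ob) \<le> fst (snd ob) + rr t'
                  else fst (snd ob) - rr t' \<le> ip d f (fst ob))" using f unfolding KS_def by auto
      then show "(if snd (snd ob) then ip d f (fst ob) \<le> fst (snd ob) + rr t
                  else fst (snd ob) - rr t \<le> ip d f (fst ob))" using r by (auto split: if_splits)
    qed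
    ultimately show ?thesis using f unfolding KS_def by auto
  qed
qed

lemma unit_ball_coord: assumes "v \<in> unit_ball d" "i < d" shows "\<bar>v i\<bar> \<le> 1"
proof -
  have "(v i)\<^sup>2 \<le> (\<Sum>j<d. (v j)\<^sup>2)"
    using assms(2) by (intro member_le_sum) auto
  also have "\<dots> \<le> 1" using assms(1) by (simp add: unit_ball_def)
  finally have "\<bar>v i\<bar>\<^sup>2 \<le> 1\<^sup>2" by simp
  then show ?thesis by (rule power2_le_imp_le) simp
qed

lemma ip_bound:
  assumes "\<And>i. i < d \<Longrightarrow> \<bar>f i\<bar> \<le> R" "x \<in> unit_ball d"
  shows "\<bar>ip d f x\<bar> \<le> real d * R"
proof -
  have "\<bar>ip d f x\<bar> \<le> (\<Sum>i<d. \<bar>f i * x i\<bar>)" unfolding ip_def by (rule sum_abs)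
  also have "\<dots> \<le> (\<Sum>i<d. R)"
  proof (rule sum_mono)
    fix i assume "i \<in> {..<d}"
    then have "\<bar>f i\<bar> \<le> R" "\<bar>x i\<bar> \<le> 1" using assms unit_ball_coord by auto
    then show "\<bar>f i * x i\<bar> \<le> R" by (simp add: abs_mult mult_le_one order_trans[OF mult_mono] )
  qed
  finally show ?thesis by simp
qed

lemma ip_diff: "ip d f x - ip d g x = ip d (\<lambda>i. f i - g i) x"
  unfolding ip_def by (simp add: sum_subtractf[symmetric] left_diff_distrib)

definition sound :: "nat \<Rightarrow> vec \<Rightarrow> obs list \<Rightarrow> bool" where
  "sound d v F \<longleftrightarrow> (\<forall>ob\<in>set F. fst ob \<in> unit_ball d \<and>
       (if snd (snd ob) then ip d v (fst ob) \<le> fst (snd ob) else fst (snd ob) \<le> ip d v (fst ob)))"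

definition cube :: "nat \<Rightarrow> vec \<Rightarrow> real \<Rightarrow> (nat \<Rightarrow> real) set" where
  "cube d v r = Pi\<^sub>E {..<d} (\<lambda>i. {v i - r .. v i + r})"

lemma cube_sub_KS:
  assumes "v \<in> unit_ball d" "sound d v F" "d \<ge> 1"
  shows "cube d v (rr t / real d) \<subseteq> KS d t F"
proof
  fix g assume g: "g \<in> cube d v (rr t / real d)"
  have gi: "\<bar>g i - v i\<bar> \<le> rr t / real d" if "i < d" for i
  proof -
    have "g i \<in> {v i - rr t / real d .. v i + rr t / real d}"
      using g that unfolding cube_def by (auto simp: PiE_iff)
    then show ?thesis by (auto simp: abs_le_iff)
  qed
  have sp: "g \<in> space (LB d)" using g unfolding cube_def by (auto simp: space_PiM PiE_iff)
  have box: "\<forall>i\<in>{..<d}. \<bar>g i\<bar> \<le> 1 + rr t / real d"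
  proof
    fix i assume "i \<in> {..<d}"
    then have "\<bar>v i\<bar> \<le> 1" "\<bar>g i - v i\<bar> \<le> rr t / real d" using unit_ball_coord[OF assms(1)] gi by auto
    then show "\<bar>g i\<bar> \<le> 1 + rr t / real d" by linarith
  qed
  have close: "\<bar>ip d g y - ip d v y\<bar> \<le> rr t" if "y \<in> unit_ball d" for y
  proof -
    have "\<bar>ip d (\<lambda>i. g i - v i) y\<bar> \<le> real d * (rr t / real d)"
      using gi that by (intro ip_bound) auto
    then show ?thesis using assms(3) by (simp add: ip_diff)
  qed
  have facts: "\<forall>ob\<in>set F. (if snd (snd ob) then ip d g (fst ob) \<le> fst (snd ob) + rr t
                  else fst (snd ob) - rr t \<le> ip d g (fst ob))"
  proof
    fix ob assume ob: "ob \<in> set F"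
    then have "fst ob \<in> unit_ball d" "(if snd (snd ob) then ip d v (fst ob) \<le> fst (snd ob) else fst (snd ob) \<le> ip d v (fst ob))"
      using assms(2) unfolding sound_def by auto
    then show "(if snd (snd ob) then ip d g (fst ob) \<le> fst (snd ob) + rr t
                  else fst (snd ob) - rr t \<le> ip d g (fst ob))"
      using close[of "fst ob"] by (auto split: if_splits simp: abs_le_iff)
  qed
  show "g \<in> KS d t F" using sp box facts unfolding KS_def by auto
qed

lemma emeasure_box: "emeasure (LB d) (Pi\<^sub>E {..<d} (\<lambda>i. {l i .. u i})) = (\<Prod>i<d. ennreal (if l i \<le> u i then u i - l i else 0))"
  by (subst lbprod.emeasure_PiM) (auto simp: emeasure_lborel_Icc_eq)

lemma emeasure_box':
  assumes "\<And>i. i < d \<Longrightarrow> l i \<le> u i"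
  shows "emeasure (LB d) (Pi\<^sub>E {..<d} (\<lambda>i. {l i .. u i})) = ennreal (\<Prod>i<d. u i - l i)"
proof -
  have "emeasure (LB d) (Pi\<^sub>E {..<d} (\<lambda>i. {l i .. u i})) = (\<Prod>i<d. ennreal (u i - l i))"
    using assms by (simp add: emeasure_box)
  also have "\<dots> = ennreal (\<Prod>i<d. u i - l i)"
    using assms by (intro prod_ennreal) simp
  finally show ?thesis .
qed

definition vol :: "nat \<Rightarrow> (nat \<Rightarrow> real) set \<Rightarrow> real" where
  "vol d S = measure (LB d) S"

lemma KS_sub_box: "KS d t F \<subseteq> Pi\<^sub>E {..<d} (\<lambda>i. {-(1 + rr t / real d) .. 1 + rr t / real d})"
proof
  fix f assume f: "f \<in> KS d t F"
  then have e: "f \<in> extensional {..<d}" unfolding KS_def by (auto simp: space_PiM PiE_iff)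
  have "f i \<in> {-(1 + rr t / real d) .. 1 + rr t / real d}" if "i \<in> {..<d}" for i
  proof -
    have "\<bar>f i\<bar> \<le> 1 + rr t / real d" using f that unfolding KS_def by auto
    then show ?thesis by (auto simp: abs_le_iff)
  qed
  then show "f \<in> Pi\<^sub>E {..<d} (\<lambda>i. {-(1 + rr t / real d) .. 1 + rr t / real d})"
    using e by (auto simp: PiE_iff)
qed

lemma KS_fin: "KS d t F \<in> fmeasurable (LB d)"
proof (rule fmeasurableI2[OF _ KS_sub_box])
  show "Pi\<^sub>E {..<d} (\<lambda>i. {-(1 + rr t / real d) .. 1 + rr t / real d}) \<in> fmeasurable (LB d)"
  proof -
    have "emeasure (LB d) (Pi\<^sub>E {..<d} (\<lambda>i. {-(1 + rr t / real d) .. 1 + rr t / real d}))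
       = ennreal (\<Prod>i<d. (1 + rr t / real d) - (-(1 + rr t / real d)))"
      using rr_pos[of t] by (intro emeasure_box') (auto intro!: divide_nonneg_nonneg)
    then have "emeasure (LB d) (Pi\<^sub>E {..<d} (\<lambda>i. {-(1 + rr t / real d) .. 1 + rr t / real d})) < \<infinity>"
      by (metis ennreal_less_top infinity_ennreal_def)
    then show ?thesis unfolding fmeasurable_def by (auto simp: sets_PiM_I_finite)
  qed
  show "KS d t F \<in> sets (LB d)" by (rule KS_sets)
qed

lemma vol_mono: "A \<subseteq> KS d t F \<Longrightarrow> A \<in> sets (LB d) \<Longrightarrow> vol d A \<le> vol d (KS d t F)"
  unfolding vol_def by (rule measure_mono_fmeasurable[OF _ _ KS_fin])

lemma vol_upper:
  assumes "d \<ge> 1"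
  shows "vol d (KS d t F) \<le> 4 ^ d"
proof -
  have r: "rr t \<le> 1" by (simp add: rr_def)
  have rd: "rr t / real d \<le> 1" using r assms by (simp add: divide_le_eq)
  let ?B = "Pi\<^sub>E {..<d} (\<lambda>i. {-(1 + rr t / real d) .. 1 + rr t / real d})"
  have eq: "emeasure (LB d) ?B = ennreal (\<Prod>i<d. (1 + rr t / real d) - (-(1 + rr t / real d)))"
    using rr_pos[of t] by (intro emeasure_box') (auto intro!: divide_nonneg_nonneg)
  have Bf: "?B \<in> fmeasurable (LB d)"
    unfolding fmeasurable_def using eq by (auto simp: sets_PiM_I_finite)
  have "vol d (KS d t F) \<le> measure (LB d) ?B"
    unfolding vol_def by (rule measure_mono_fmeasurable[OF KS_sub_box KS_sets Bf])
  also have "\<dots> = (\<Prod>i<d. (1 + rr t / real d) - (-(1 + rr t / real d)))"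
    unfolding measure_def using eq rr_pos[of t] by (simp add: prod_nonneg)
  also have "\<dots> = (2 + 2 * (rr t / real d)) ^ d" by simp
  also have "\<dots> \<le> 4 ^ d" using rd rr_pos[of t] by (intro power_mono) auto
  finally show ?thesis .
qed

lemma vol_lower:
  assumes "v \<in> unit_ball d" "sound d v F" "d \<ge> 1"
  shows "vol d (KS d t F) \<ge> (2 * (rr t / real d)) ^ d"
proof -
  have c: "cube d v (rr t / real d) \<in> sets (LB d)" unfolding cube_def by (simp add: sets_PiM_I_finite)
  have eq: "emeasure (LB d) (cube d v (rr t / real d)) = ennreal (\<Prod>i<d. (v i + rr t / real d) - (v i - rr t / real d))"
    unfolding cube_def using rr_pos[of t] by (intro emeasure_box') (auto intro!: divide_nonneg_nonneg)
  have "(2 * (rr t / real d)) ^ d = measure (LB d) (cube d v (rr t / real d))"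
    unfolding measure_def using eq rr_pos[of t] by (simp add: prod_nonneg)
  also have "\<dots> \<le> vol d (KS d t F)"
    using vol_mono[OF cube_sub_KS[OF assms] c] unfolding vol_def .
  finally show ?thesis by simp
qed

definition lo :: "nat \<Rightarrow> nat \<Rightarrow> obs list \<Rightarrow> vec \<Rightarrow> real" where
  "lo d t F x = Inf ((\<lambda>f. ip d f x) ` KS d t F)"
definition hi :: "nat \<Rightarrow> nat \<Rightarrow> obs list \<Rightarrow> vec \<Rightarrow> real" where
  "hi d t F x = Sup ((\<lambda>f. ip d f x) ` KS d t F)"

lemma KS_ip_bound:
  assumes "f \<in> KS d t F" "x \<in> unit_ball d"
  shows "\<bar>ip d f x\<bar> \<le> real d * 2"
proof -
  have r: "rr t \<le> 1" by (simp add: rr_def)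
  have "\<bar>f i\<bar> \<le> 2" if "i < d" for i
  proof -
    have "\<bar>f i\<bar> \<le> 1 + rr t / real d" using assms that unfolding KS_def by auto
    moreover have "rr t / real d \<le> 1"
    proof (cases "d = 0")
      case False
      then have "real d \<ge> 1" by simp
      then have "rr t / real d \<le> rr t" using rr_pos[of t] by (simp add: divide_le_eq mult_le_cancel_left1 less_imp_le)
      then show ?thesis using r by linarith
    qed simp
    ultimately show ?thesis by linarith
  qed
  then show ?thesis using assms(2) by (intro ip_bound) auto
qed

lemma bdd_KS:
  assumes "x \<in> unit_ball d"
  shows "bdd_above ((\<lambda>f. ip d f x) ` KS d t F)" "bdd_below ((\<lambda>f. ip d f x) ` KS d t F)"
proof -
  have "\<forall>y\<in>(\<lambda>f. ip d f x) ` KS d t F. y \<le> real d * 2" using KS_ip_bound[OF _ assms] by (auto simp: abs_le_iff)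
  then show "bdd_above ((\<lambda>f. ip d f x) ` KS d t F)" unfolding bdd_above_def by blast
  have "\<forall>y\<in>(\<lambda>f. ip d f x) ` KS d t F. - (real d * 2) \<le> y" using KS_ip_bound[OF _ assms] by (force simp: abs_le_iff)
  then show "bdd_below ((\<lambda>f. ip d f x) ` KS d t F)" unfolding bdd_below_def by blast
qed

lemma lo_le: "f \<in> KS d t F \<Longrightarrow> x \<in> unit_ball d \<Longrightarrow> lo d t F x \<le> ip d f x"
  unfolding lo_def by (rule cInf_lower) (auto intro: bdd_KS)
lemma le_hi: "f \<in> KS d t F \<Longrightarrow> x \<in> unit_ball d \<Longrightarrow> ip d f x \<le> hi d t F x"
  unfolding hi_def by (rule cSup_upper) (auto intro: bdd_KS)

lemma near_hi:
  assumes "f0 \<in> KS d t F" "x \<in> unit_ball d" "\<delta> > 0"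
  obtains p where "p \<in> KS d t F" "ip d p x > hi d t F x - \<delta>"
proof -
  have "hi d t F x - \<delta> < Sup ((\<lambda>f. ip d f x) ` KS d t F)" using assms(3) unfolding hi_def by simp
  then obtain y where "y \<in> (\<lambda>f. ip d f x) ` KS d t F" "hi d t F x - \<delta> < y"
    using less_cSupD[of "(\<lambda>f. ip d f x) ` KS d t F"] assms(1) by blast
  then show ?thesis using that by auto
qed

lemma near_lo:
  assumes "f0 \<in> KS d t F" "x \<in> unit_ball d" "\<delta> > 0"
  obtains p where "p \<in> KS d t F" "ip d p x < lo d t F x + \<delta>"
proof -
  have "Inf ((\<lambda>f. ip d f x) ` KS d t F) < lo d t F x + \<delta>" using assms(3) unfolding lo_def by simp
  then obtain y where "y \<in> (\<lambda>f. ip d f x) ` KS d t F" "y < lo d t F x + \<delta>"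
    using cInf_lessD[of "(\<lambda>f. ip d f x) ` KS d t F"] assms(1) by blast
  then show ?thesis using that by auto
qed

lemma ip_comb:
  assumes "\<And>i. i < d \<Longrightarrow> g i = a * f i + b * y i"
  shows "ip d g z = a * ip d f z + b * ip d y z"
  unfolding ip_def using assms
  by (simp add: sum_distrib_left sum.distrib[symmetric] algebra_simps)

lemma KS_convex:
  assumes f: "f \<in> KS d t F" and y: "y \<in> KS d t F" and l: "0 \<le> l" "l \<le> 1"
    and g: "g \<in> space (LB d)" "\<And>i. i < d \<Longrightarrow> g i = (1 - l) * f i + l * y i"
  shows "g \<in> KS d t F"
proof -
  let ?R = "1 + rr t / real d"
  have box: "\<forall>i\<in>{..<d}. \<bar>g i\<bar> \<le> ?R"
  proof
    fix i assume i: "i \<in> {..<d}"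
    have "\<bar>f i\<bar> \<le> ?R" "\<bar>y i\<bar> \<le> ?R" using f y i unfolding KS_def by auto
    have "g i = (1 - l) * f i + l * y i" using g(2) i by simp
    then have "\<bar>g i\<bar> \<le> \<bar>(1 - l) * f i\<bar> + \<bar>l * y i\<bar>" by (simp only: abs_triangle_ineq)
    also have "\<dots> = (1 - l) * \<bar>f i\<bar> + l * \<bar>y i\<bar>" using l by (simp add: abs_mult)
    also have "\<dots> \<le> (1 - l) * ?R + l * ?R"
      using \<open>\<bar>f i\<bar> \<le> ?R\<close> \<open>\<bar>y i\<bar> \<le> ?R\<close> l by (intro add_mono mult_left_mono) auto
    also have "\<dots> = ((1 - l) + l) * ?R" by (rule distrib_right[symmetric])
    also have "\<dots> = ?R" by simp
    finally show "\<bar>g i\<bar> \<le> ?R" .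
  qed
  have facts: "\<forall>ob\<in>set F. (if snd (snd ob) then ip d g (fst ob) \<le> fst (snd ob) + rr t
                  else fst (snd ob) - rr t \<le> ip d g (fst ob))"
  proof
    fix ob assume ob: "ob \<in> set F"
    obtain z m u where obe: "ob = (z, m, u)" by (cases ob) auto
    have cf: "if u then ip d f z \<le> m + rr t else m - rr t \<le> ip d f z"
      and cy: "if u then ip d y z \<le> m + rr t else m - rr t \<le> ip d y z"
      using f y ob obe unfolding KS_def by auto
    have ipg: "ip d g z = (1 - l) * ip d f z + l * ip d y z" using g(2) by (rule ip_comb)
    show "(if snd (snd ob) then ip d g (fst ob) \<le> fst (snd ob) + rr t
                  else fst (snd ob) - rr t \<le> ip d g (fst ob))"
    proof (cases u)
      case True
      then have "ip d f z \<le> m + rr t" "ip d y z \<le> m + rr t" using cf cy by auto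
      then have "(1 - l) * ip d f z + l * ip d y z \<le> (1 - l) * (m + rr t) + l * (m + rr t)"
        using l by (intro add_mono mult_left_mono) auto
      then show ?thesis using True obe ipg by (simp add: algebra_simps)
    next
      case False
      then have "m - rr t \<le> ip d f z" "m - rr t \<le> ip d y z" using cf cy by auto
      then have "(1 - l) * (m - rr t) + l * (m - rr t) \<le> (1 - l) * ip d f z + l * ip d y z"
        using l by (intro add_mono mult_left_mono) auto
      then show ?thesis using False obe ipg by (simp add: algebra_simps)
    qed
  qed
  show ?thesis using g(1) box facts unfolding KS_def by auto
qed

lemma measure_hinv:
  assumes "l > 0"
  shows "measure (LB d) (hinv d c l -` KS d t F \<inter> space (LB d)) = l ^ d * vol d (KS d t F)"
proof -
  have "measure (LB d) (hinv d c l -` KS d t F \<inter> space (LB d)) = enn2real (ennreal (l ^ d) * emeasure (LB d) (KS d t F))"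
    unfolding measure_def using emeasure_hinv[OF assms KS_sets, of d c t F] by (rule arg_cong)
  also have "\<dots> = enn2real (ennreal (l ^ d)) * enn2real (emeasure (LB d) (KS d t F))"
    by (rule enn2real_mult)
  also have "enn2real (ennreal (l ^ d)) = l ^ d" using assms by simp
  finally show ?thesis unfolding vol_def measure_def .
qed

lemma hinv_img_sub:
  assumes p: "p \<in> KS d t F" and l: "0 < l" "l \<le> 1"
    and g: "g \<in> hinv d (\<lambda>i. (1 - l) * p i) l -` KS d t F \<inter> space (LB d)"
  shows "g \<in> KS d t F"
    and "\<And>i. i < d \<Longrightarrow> g i = (1 - l) * p i + l * hinv d (\<lambda>i. (1 - l) * p i) l g i"
    and "hinv d (\<lambda>i. (1 - l) * p i) l g \<in> KS d t F"
proof -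
  show gi: "g i = (1 - l) * p i + l * hinv d (\<lambda>i. (1 - l) * p i) l g i" if "i < d" for i
  proof -
    have "hinv d (\<lambda>i. (1 - l) * p i) l g i = (g i - (1 - l) * p i) / l" using that by (simp add: hinv_def)
    then have "l * hinv d (\<lambda>i. (1 - l) * p i) l g i = g i - (1 - l) * p i" using l by simp
    then show ?thesis by linarith
  qed
  show "hinv d (\<lambda>i. (1 - l) * p i) l g \<in> KS d t F" using g by (simp only: vimage_def Int_iff mem_Collect_eq)
  moreover have "g \<in> space (LB d)" using g by (simp only: Int_iff)
  ultimately show "g \<in> KS d t F"
    by (rule KS_convex[OF p _ less_imp_le[OF l(1)] l(2) _ gi])
qed

lemma cut_top:
  assumes f0: "f0 \<in> KS d t F" and x: "x \<in> unit_ball d" and l: "0 < l" "l \<le> 1"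
    and tt: "t \<le> t'" and F': "set F \<subseteq> set F'" "(x, M, True) \<in> set F'"
    and key: "l * (hi d t F x - lo d t F x) < hi d t F x - M - rr t"
  shows "vol d (KS d t' F') \<le> (1 - l ^ d) * vol d (KS d t F)"
proof -
  define S where "S = KS d t F"
  define \<delta> where "\<delta> = (hi d t F x - M - rr t - l * (hi d t F x - lo d t F x)) / 2"
  have \<delta>: "\<delta> > 0" using key unfolding \<delta>_def by simp
  obtain p where p: "p \<in> S" "ip d p x > hi d t F x - \<delta>"
    using near_hi[OF f0 x \<delta>] unfolding S_def by blast
  define c where "c = (\<lambda>i. (1 - l) * p i)"
  define Img where "Img = hinv d c l -` S \<inter> space (LB d)"
  have Img_sets: "Img \<in> sets (LB d)"
    unfolding Img_def S_def by (rule measurable_sets[OF hinv_meas KS_sets])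
  have Img_sub: "Img \<subseteq> S" using hinv_img_sub(1)[OF p(1)[unfolded S_def] l] unfolding Img_def c_def S_def by blast
  have disj: "KS d t' F' \<subseteq> S - Img"
  proof
    fix g assume g: "g \<in> KS d t' F'"
    have gS: "g \<in> S" using KS_mono[OF tt F'(1)] g unfolding S_def by auto
    have "g \<notin> Img"
    proof
      assume gI: "g \<in> Img"
      let ?y = "hinv d c l g"
      have gI': "g \<in> hinv d (\<lambda>i. (1 - l) * p i) l -` KS d t F \<inter> space (LB d)"
        using gI unfolding Img_def c_def S_def .
      have yS: "?y \<in> S" using hinv_img_sub(3)[OF p(1)[unfolded S_def] l gI'] unfolding c_def S_def .
      have gi: "\<And>i. i < d \<Longrightarrow> g i = (1 - l) * p i + l * ?y i"
        using hinv_img_sub(2)[OF p(1)[unfolded S_def] l gI'] unfolding c_def .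
      have ipg: "ip d g x = (1 - l) * ip d p x + l * ip d ?y x" using gi by (rule ip_comb)
      have ylo: "lo d t F x \<le> ip d ?y x" using lo_le[OF yS[unfolded S_def] x] .
      have "(1 - l) * (hi d t F x - \<delta>) \<le> (1 - l) * ip d p x" using p(2) l by (intro mult_left_mono) auto
      moreover have "l * lo d t F x \<le> l * ip d ?y x" using ylo l by (intro mult_left_mono) auto
      ultimately have "ip d g x \<ge> (1 - l) * (hi d t F x - \<delta>) + l * lo d t F x" using ipg by linarith
      moreover have "(1 - l) * (hi d t F x - \<delta>) + l * lo d t F x = hi d t F x - \<delta> - l * (hi d t F x - lo d t F x) + l * \<delta>"
        by (simp add: algebra_simps)
      moreover have "l * \<delta> \<ge> 0" using l \<delta> by simp
      moreover have "hi d t F x - l * (hi d t F x - lo d t F x) - M - rr t = 2 * \<delta>" unfolding \<delta>_def by simp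
      ultimately have "ip d g x > M + rr t" using \<delta> by linarith
      moreover have "ip d g x \<le> M + rr t'" using g F'(2) unfolding KS_def by fastforce
      moreover have "rr t' \<le> rr t" using rr_anti[OF tt] .
      ultimately show False by linarith
    qed
    then show "g \<in> S - Img" using gS by auto
  qed
  have "vol d (KS d t' F') \<le> measure (LB d) (S - Img)"
    unfolding vol_def S_def
    by (rule measure_mono_fmeasurable[OF disj[unfolded S_def] KS_sets]) (intro fmeasurable_Diff KS_fin Img_sets[unfolded S_def])
  also have "\<dots> = measure (LB d) S - measure (LB d) Img"
    using KS_fin[of d t F] Img_sets Img_sub unfolding S_def
    by (intro measure_Diff) (auto simp: fmeasurable_def)
  also have "measure (LB d) Img = l ^ d * vol d S"
    unfolding Img_def S_def by (rule measure_hinv) (rule l(1))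
  finally show ?thesis unfolding S_def vol_def by (simp add: algebra_simps)
qed

lemma cut_bot:
  assumes f0: "f0 \<in> KS d t F" and x: "x \<in> unit_ball d" and l: "0 < l" "l \<le> 1"
    and tt: "t \<le> t'" and F': "set F \<subseteq> set F'" "(x, M, False) \<in> set F'"
    and key: "l * (hi d t F x - lo d t F x) < M - rr t - lo d t F x"
  shows "vol d (KS d t' F') \<le> (1 - l ^ d) * vol d (KS d t F)"
proof -
  define S where "S = KS d t F"
  define \<delta> where "\<delta> = (M - rr t - lo d t F x - l * (hi d t F x - lo d t F x)) / 2"
  have \<delta>: "\<delta> > 0" using key unfolding \<delta>_def by simp
  obtain p where p: "p \<in> S" "ip d p x < lo d t F x + \<delta>"
    using near_lo[OF f0 x \<delta>] unfolding S_def by blast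
  define c where "c = (\<lambda>i. (1 - l) * p i)"
  define Img where "Img = hinv d c l -` S \<inter> space (LB d)"
  have Img_sets: "Img \<in> sets (LB d)"
    unfolding Img_def S_def by (rule measurable_sets[OF hinv_meas KS_sets])
  have Img_sub: "Img \<subseteq> S" using hinv_img_sub(1)[OF p(1)[unfolded S_def] l] unfolding Img_def c_def S_def by blast
  have disj: "KS d t' F' \<subseteq> S - Img"
  proof
    fix g assume g: "g \<in> KS d t' F'"
    have gS: "g \<in> S" using KS_mono[OF tt F'(1)] g unfolding S_def by auto
    have "g \<notin> Img"
    proof
      assume gI: "g \<in> Img"
      let ?y = "hinv d c l g"
      have gI': "g \<in> hinv d (\<lambda>i. (1 - l) * p i) l -` KS d t F \<inter> space (LB d)"
        using gI unfolding Img_def c_def S_def .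
      have yS: "?y \<in> S" using hinv_img_sub(3)[OF p(1)[unfolded S_def] l gI'] unfolding c_def S_def .
      have gi: "\<And>i. i < d \<Longrightarrow> g i = (1 - l) * p i + l * ?y i"
        using hinv_img_sub(2)[OF p(1)[unfolded S_def] l gI'] unfolding c_def .
      have ipg: "ip d g x = (1 - l) * ip d p x + l * ip d ?y x" using gi by (rule ip_comb)
      have yhi: "ip d ?y x \<le> hi d t F x" using le_hi[OF yS[unfolded S_def] x] .
      have "(1 - l) * ip d p x \<le> (1 - l) * (lo d t F x + \<delta>)" using p(2) l by (intro mult_left_mono) auto
      moreover have "l * ip d ?y x \<le> l * hi d t F x" using yhi l by (intro mult_left_mono) auto
      ultimately have "ip d g x \<le> (1 - l) * (lo d t F x + \<delta>) + l * hi d t F x" using ipg by linarith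
      moreover have "(1 - l) * (lo d t F x + \<delta>) + l * hi d t F x = lo d t F x + \<delta> + l * (hi d t F x - lo d t F x) - l * \<delta>"
        by (simp add: algebra_simps)
      moreover have "l * \<delta> \<ge> 0" using l \<delta> by simp
      moreover have "M - rr t - lo d t F x - l * (hi d t F x - lo d t F x) = 2 * \<delta>" unfolding \<delta>_def by simp
      ultimately have "ip d g x < M - rr t" using \<delta> by linarith
      moreover have "M - rr t' \<le> ip d g x" using g F'(2) unfolding KS_def by fastforce
      moreover have "rr t' \<le> rr t" using rr_anti[OF tt] .
      ultimately show False by linarith
    qed
    then show "g \<in> S - Img" using gS by auto
  qed
  have "vol d (KS d t' F') \<le> measure (LB d) (S - Img)"
    unfolding vol_def S_def
    by (rule measure_mono_fmeasurable[OF disj[unfolded S_def] KS_sets]) (intro fmeasurable_Diff KS_fin Img_sets[unfolded S_def])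
  also have "\<dots> = measure (LB d) S - measure (LB d) Img"
    using KS_fin[of d t F] Img_sets Img_sub unfolding S_def
    by (intro measure_Diff) (auto simp: fmeasurable_def)
  also have "measure (LB d) Img = l ^ d * vol d S"
    unfolding Img_def S_def by (rule measure_hinv) (rule l(1))
  finally show ?thesis unfolding S_def vol_def by (simp add: algebra_simps)
qed

definition upd :: "nat \<Rightarrow> nat \<Rightarrow> obs list \<times> obs list \<Rightarrow> vec \<times> real \<times> real \<times> bool \<Rightarrow> obs list \<times> obs list" where
  "upd d t st e = (case e of (x, p, q, f) \<Rightarrow>
     if f then (fst st @ [(x, p, True)], snd st @ [(x, q, False)])
     else if q \<le> lo d t (snd st) x then (fst st @ [(x, p, False)], snd st)
     else if hi d t (fst st) x \<le> p then (fst st, snd st @ [(x, q, True)])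
     else st)"

fun stR :: "nat \<Rightarrow> hist \<Rightarrow> obs list \<times> obs list" where
  "stR d [] = ([], [])"
| "stR d (e # rh) = upd d (length rh) (stR d rh) e"

definition st :: "nat \<Rightarrow> hist \<Rightarrow> obs list \<times> obs list" where
  "st d h = stR d (rev h)"

lemma st_Nil: "st d [] = ([], [])" by (simp add: st_def)
lemma st_snoc: "st d (h @ [e]) = upd d (length h) (st d h) e"
  by (simp add: st_def)

definition Ngrid :: "real \<Rightarrow> real \<Rightarrow> nat" where
  "Ngrid G e = nat \<lceil>4 * G / e\<rceil>"

definition gridp :: "real \<Rightarrow> real \<Rightarrow> nat \<Rightarrow> nat \<Rightarrow> real \<times> real" where
  "gridp a G N j = (a + real j * G / real N, a + real j * G / real N)"

definition act :: "real \<Rightarrow> real \<Rightarrow> real \<Rightarrow> real \<Rightarrow> real \<Rightarrow> (real \<times> real) pmf" where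
  "act e a1 a2 b1 b2 =
    (if b2 - a1 \<le> e then return_pmf (0, 0)
     else if a2 - a1 \<le> e \<and> b2 - b1 \<le> e then (if a2 \<le> b1 then return_pmf (a2, b1) else return_pmf (0, 0))
     else if a2 - a1 > e \<and> a1 + (a2 - a1) / 3 \<le> b1 then return_pmf (min ((a1 + a2) / 2) b1, b1)
     else if b2 - b1 > e \<and> a2 \<le> b2 - (b2 - b1) / 3 then return_pmf (a2, max ((b1 + b2) / 2) a2)
     else map_pmf (gridp a1 (b2 - a1) (Ngrid (b2 - a1) e)) (pmf_of_set {0..Ngrid (b2 - a1) e}))"

definition alg :: "nat \<Rightarrow> learner" where
  "alg d h x = act (eps (length h))
      (lo d (length h) (fst (st d h)) x) (hi d (length h) (fst (st d h)) x)
      (lo d (length h) (snd (st d h)) x) (hi d (length h) (snd (st d h)) x)"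

lemma act_bb: "(p, q) \<in> set_pmf (act e a1 a2 b1 b2) \<Longrightarrow> p \<le> q"
  unfolding act_def gridp_def by (auto split: if_splits)

lemma alg_bb: "budget_balanced (alg d)"
  unfolding budget_balanced_def alg_def using act_bb by blast

lemma act_finite: "finite (set_pmf (act e a1 a2 b1 b2))"
  unfolding act_def by auto

lemma run_Suc: "run d A s b x (Suc t) = bind_pmf (run d A s b x t) (\<lambda>h. bind_pmf (A h (x t))
   (\<lambda>pq. return_pmf (h @ [(x t, fst pq, snd pq, ip d s (x t) \<le> fst pq \<and> snd pq \<le> ip d b (x t))])))"
  by simp

lemma run_finite: "finite (set_pmf (run d (alg d) s b x t))"
proof (induction t)
  case 0 then show ?case by simp
next
  case (Suc t)
  have "finite (set_pmf (alg d h (x t)))" for h unfolding alg_def by (rule act_finite)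
  then show ?case using Suc by (simp add: run_Suc)
qed

lemma run_length: "h \<in> set_pmf (run d A s b x t) \<Longrightarrow> length h = t"
  by (induction t arbitrary: h) (auto simp: run_Suc)

lemma restrict_in_KS:
  assumes "v \<in> unit_ball d" "sound d v F" "d \<ge> 1"
  shows "restrict v {..<d} \<in> KS d t F"
proof -
  have "restrict v {..<d} \<in> cube d v (rr t / real d)"
    unfolding cube_def using rr_pos[of t] by (auto simp: PiE_iff)
  then show ?thesis using cube_sub_KS[OF assms] by auto
qed

lemma ip_restrict: "ip d (restrict v {..<d}) y = ip d v y"
  unfolding ip_def by simp

lemma truth_range:
  assumes "v \<in> unit_ball d" "sound d v F" "d \<ge> 1" "x \<in> unit_ball d"
  shows "lo d t F x \<le> ip d v x" "ip d v x \<le> hi d t F x"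
  using lo_le[OF restrict_in_KS[OF assms(1-3)] assms(4)] le_hi[OF restrict_in_KS[OF assms(1-3)] assms(4)]
  by (simp_all add: ip_restrict)

lemma sound_upd:
  assumes s: "s \<in> unit_ball d" and b: "b \<in> unit_ball d" and d: "d \<ge> 1" and x: "x \<in> unit_ball d"
    and ss: "sound d s (fst S)" and sb: "sound d b (snd S)"
    and f: "f = (ip d s x \<le> p \<and> q \<le> ip d b x)"
  shows "sound d s (fst (upd d t S (x, p, q, f)))" "sound d b (snd (upd d t S (x, p, q, f)))"
proof -
  have r1: "lo d t (snd S) x \<le> ip d b x" using truth_range(1)[OF b sb d x] .
  have r2: "ip d s x \<le> hi d t (fst S) x" using truth_range(2)[OF s ss d x] .
  show "sound d s (fst (upd d t S (x, p, q, f)))"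
    using ss x f r1 unfolding upd_def sound_def by auto
  show "sound d b (snd (upd d t S (x, p, q, f)))"
    using sb x f r2 unfolding upd_def sound_def by auto
qed

definition good :: "nat \<Rightarrow> vec \<Rightarrow> vec \<Rightarrow> hist \<Rightarrow> bool" where
  "good d s b h \<longleftrightarrow> sound d s (fst (st d h)) \<and> sound d b (snd (st d h))"

lemma run_good:
  assumes s: "s \<in> unit_ball d" and b: "b \<in> unit_ball d" and d: "d \<ge> 1" and x: "\<And>t. x t \<in> unit_ball d"
  shows "h \<in> set_pmf (run d (alg d) s b x t) \<Longrightarrow> good d s b h"
proof (induction t arbitrary: h)
  case 0 then show ?case by (simp add: good_def st_Nil sound_def)
next
  case (Suc t)
  then obtain h0 pq where h0: "h0 \<in> set_pmf (run d (alg d) s b x t)"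
    and h: "h = h0 @ [(x t, fst pq, snd pq, ip d s (x t) \<le> fst pq \<and> snd pq \<le> ip d b (x t))]"
    by (auto simp: run_Suc)
  have g0: "good d s b h0" using Suc.IH[OF h0] .
  show ?case unfolding good_def h st_snoc
    using sound_upd[OF s b d x g0[unfolded good_def, THEN conjunct1] g0[unfolded good_def, THEN conjunct2]]
    by blast
qed

lemma sound_sub: "sound d v F' \<Longrightarrow> set F \<subseteq> set F' \<Longrightarrow> sound d v F"
  unfolding sound_def by blast

lemma vol_pos:
  assumes "v \<in> unit_ball d" "sound d v F" "d \<ge> 1"
  shows "vol d (KS d t F) > 0"
proof -
  have "0 < (2 * (rr t / real d)) ^ d" using rr_pos[of t] assms(3) by simp
  also have "\<dots> \<le> vol d (KS d t F)" by (rule vol_lower[OF assms])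
  finally show ?thesis .
qed

lemma lnvol_le:
  assumes v: "v \<in> unit_ball d" and so: "sound d v F'" and d: "d \<ge> 1" and sub: "set F \<subseteq> set F'" and tt: "t \<le> t'"
  shows "ln (vol d (KS d t' F')) \<le> ln (vol d (KS d t F))"
proof -
  have "vol d (KS d t' F') \<le> vol d (KS d t F)" by (rule vol_mono[OF KS_mono[OF tt sub] KS_sets])
  moreover have "0 < vol d (KS d t' F')" using vol_pos[OF v so d] .
  ultimately show ?thesis by simp
qed

lemma lnvol_cut:
  assumes v: "v \<in> unit_ball d" and so: "sound d v F'" and d: "d \<ge> 1" and sub: "set F \<subseteq> set F'" and tt: "t \<le> t'"
    and x: "x \<in> unit_ball d"
    and cut: "((x, M, True) \<in> set F' \<and> (1/5) * (hi d t F x - lo d t F x) < hi d t F x - M - rr t) \<or>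
              ((x, M, False) \<in> set F' \<and> (1/5) * (hi d t F x - lo d t F x) < M - rr t - lo d t F x)"
  shows "ln (vol d (KS d t' F')) \<le> ln (vol d (KS d t F)) - (1/5) ^ d"
proof -
  have soF: "sound d v F" using sound_sub[OF so sub] .
  have f0: "restrict v {..<d} \<in> KS d t F" by (rule restrict_in_KS[OF v soF d])
  have le: "vol d (KS d t' F') \<le> (1 - (1/5) ^ d) * vol d (KS d t F)"
    using cut
  proof
    assume c: "(x, M, True) \<in> set F' \<and> (1/5) * (hi d t F x - lo d t F x) < hi d t F x - M - rr t"
    show ?thesis by (rule cut_top[OF f0 x _ _ tt sub]) (use c in auto)
  next
    assume c: "(x, M, False) \<in> set F' \<and> (1/5) * (hi d t F x - lo d t F x) < M - rr t - lo d t F x"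
    show ?thesis by (rule cut_bot[OF f0 x _ _ tt sub]) (use c in auto)
  qed
  have p1: "vol d (KS d t' F') > 0" by (rule vol_pos[OF v so d])
  have p0: "vol d (KS d t F) > 0" by (rule vol_pos[OF v soF d])
  have c0: "0 < 1 - (1/5::real) ^ d" using d by (simp add: power_less_one_iff)
  have "ln (vol d (KS d t' F')) \<le> ln ((1 - (1/5) ^ d) * vol d (KS d t F))"
    using le p1 by simp
  also have "\<dots> = ln (1 - (1/5) ^ d) + ln (vol d (KS d t F))"
    using c0 p0 by (simp add: ln_mult)
  also have "ln (1 - (1/5::real) ^ d) \<le> (1 - (1/5) ^ d) - 1"
    using c0 by (rule ln_le_minus_one)
  finally show ?thesis by simp
qed

lemma grid_count:
  assumes au: "a \<le> u" and uv: "u \<le> v" and vG: "v \<le> a + G" and e: "e > 0" and gap: "v - u > e"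
  defines "N \<equiv> Ngrid G e"
  shows "real (card {j \<in> {0..N}. u \<le> a + real j * G / real N \<and> a + real j * G / real N \<le> v})
           \<ge> (3/8) * ((v - u) / G) * real (N + 1)"
proof -
  have G: "G > e" using au uv vG gap by linarith
  have Gp: "G > 0" using G e by linarith
  have N4: "real N \<ge> 4 * G / e" unfolding N_def Ngrid_def by linarith
  have "4 * G / e > 4" using G e by (simp add: field_simps)
  then have Npos: "real N > 4" using N4 by linarith
  define A where "A = (u - a) * real N / G"
  define B where "B = (v - a) * real N / G"
  have A0: "A \<ge> 0" unfolding A_def using au Gp Npos by simp
  have BN: "B \<le> real N"
  proof -
    have "(v - a) * real N \<le> G * real N" using vG Npos by (intro mult_right_mono) auto
    then show ?thesis unfolding B_def using Gp by (simp add: divide_le_eq mult.commute)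
  qed
  have BA: "B - A = (v - u) * real N / G" unfolding A_def B_def by (simp add: diff_divide_distrib[symmetric] left_diff_distrib)
  have big: "(v - u) * real N / G \<ge> 4"
  proof -
    have "(v - u) * real N / G \<ge> e * (4 * G / e) / G"
      using gap N4 Gp e by (intro divide_right_mono mult_mono) (auto simp: less_imp_le)
    also have "e * (4 * G / e) / G = 4" using e Gp by simp
    finally show ?thesis .
  qed
  define lj where "lj = nat \<lceil>A\<rceil>"
  define hj where "hj = nat \<lfloor>B\<rfloor>"
  have Ac: "real lj \<ge> A" unfolding lj_def using A0 by (simp add: le_of_int_ceiling)
  have Bf: "real hj \<le> B" 
  proof (cases "B \<ge> 0")
    case True then show ?thesis unfolding hj_def by (simp add: of_int_floor_le)
  next
    case False then show ?thesis unfolding hj_def using A0 BA big by linarith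
  qed
  have sub: "{lj..hj} \<subseteq> {j \<in> {0..N}. u \<le> a + real j * G / real N \<and> a + real j * G / real N \<le> v}"
  proof
    fix j assume j: "j \<in> {lj..hj}"
    then have j1: "real j \<ge> A" using Ac by auto
    have j2: "real j \<le> B" using j Bf by auto
    have AG: "A * G / real N = u - a" unfolding A_def using Gp Npos by simp
    have BG: "B * G / real N = v - a" unfolding B_def using Gp Npos by simp
    have "A * G / real N \<le> real j * G / real N" using j1 Gp Npos by (intro divide_right_mono mult_right_mono) auto
    moreover have "real j * G / real N \<le> B * G / real N" using j2 Gp Npos by (intro divide_right_mono mult_right_mono) auto
    moreover have "j \<le> N" using j2 BN by linarith
    ultimately show "j \<in> {j \<in> {0..N}. u \<le> a + real j * G / real N \<and> a + real j * G / real N \<le> v}"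
      using AG BG by auto
  qed
  have "real (card {lj..hj}) \<ge> B - A - 1"
  proof -
    have "real lj \<le> A + 1" unfolding lj_def using A0 by linarith
    moreover have "real hj \<ge> B - 1" unfolding hj_def using A0 BA big by linarith
    ultimately have "real hj + 1 - real lj \<ge> B - A - 1" by linarith
    moreover have "lj \<le> hj + 1" using \<open>real lj \<le> A + 1\<close> \<open>real hj \<ge> B - 1\<close> BA big by linarith
    ultimately show ?thesis by (simp add: of_nat_diff)
  qed
  also have "\<dots> \<le> real (card {j \<in> {0..N}. u \<le> a + real j * G / real N \<and> a + real j * G / real N \<le> v})"
    using card_mono[OF _ sub] by simp
  finally have c: "real (card {j \<in> {0..N}. u \<le> a + real j * G / real N \<and> a + real j * G / real N \<le> v}) \<ge> (v - u) * real N / G - 1"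
    using BA by simp
  have "(3/8) * ((v - u) / G) * real (N + 1) \<le> (3/4) * ((v - u) * real N / G)"
  proof -
    have "real (N + 1) \<le> 2 * real N" using Npos by simp
    then have "(3/8) * ((v - u) / G) * real (N + 1) \<le> (3/8) * ((v - u) / G) * (2 * real N)"
      using uv Gp by (intro mult_left_mono) auto
    also have "\<dots> = (3/4) * ((v - u) * real N / G)" by simp
    finally show ?thesis .
  qed
  also have "\<dots> \<le> (v - u) * real N / G - 1" using big by linarith
  finally show ?thesis using c by linarith
qed

definition Psi :: "nat \<Rightarrow> hist \<Rightarrow> real" where
  "Psi d h = ln (vol d (KS d (length h) (fst (st d h)))) + ln (vol d (KS d (length h) (snd (st d h))))"

lemma upd_sub: "set (fst S) \<subseteq> set (fst (upd d t S e))" "set (snd S) \<subseteq> set (snd (upd d t S e))"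
  unfolding upd_def by (auto split: prod.splits)

lemma psi_step:
  assumes d: "d \<ge> 1" and s: "s \<in> unit_ball d" and b: "b \<in> unit_ball d" and x: "x \<in> unit_ball d"
    and g: "good d s b h" and e: "e = (x, p, q, ip d s x \<le> p \<and> q \<le> ip d b x)"
  shows "Psi d (h @ [e]) \<le> Psi d h"
    and "((x, M, True) \<in> set (fst (st d (h @ [e]))) \<and> (1/5) * (hi d (length h) (fst (st d h)) x - lo d (length h) (fst (st d h)) x) < hi d (length h) (fst (st d h)) x - M - rr (length h)) \<or>
         ((x, M, False) \<in> set (fst (st d (h @ [e]))) \<and> (1/5) * (hi d (length h) (fst (st d h)) x - lo d (length h) (fst (st d h)) x) < M - rr (length h) - lo d (length h) (fst (st d h)) x)
         \<Longrightarrow> Psi d (h @ [e]) \<le> Psi d h - (1/5) ^ d"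
    and "((x, M, True) \<in> set (snd (st d (h @ [e]))) \<and> (1/5) * (hi d (length h) (snd (st d h)) x - lo d (length h) (snd (st d h)) x) < hi d (length h) (snd (st d h)) x - M - rr (length h)) \<or>
         ((x, M, False) \<in> set (snd (st d (h @ [e]))) \<and> (1/5) * (hi d (length h) (snd (st d h)) x - lo d (length h) (snd (st d h)) x) < M - rr (length h) - lo d (length h) (snd (st d h)) x)
         \<Longrightarrow> Psi d (h @ [e]) \<le> Psi d h - (1/5) ^ d"
proof -
  define t where "t = length h"
  have stn: "st d (h @ [e]) = upd d t (st d h) e" unfolding t_def by (rule st_snoc)
  have len: "length (h @ [e]) = Suc t" unfolding t_def by simp
  have g0s: "sound d s (fst (st d h))" and g0b: "sound d b (snd (st d h))" using g unfolding good_def by auto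
  have g1s: "sound d s (fst (st d (h @ [e])))" and g1b: "sound d b (snd (st d (h @ [e])))"
    unfolding stn using sound_upd[OF s b d x g0s g0b refl, of t p q, folded e] by auto
  have subs: "set (fst (st d h)) \<subseteq> set (fst (st d (h @ [e])))" unfolding stn by (rule upd_sub)
  have subb: "set (snd (st d h)) \<subseteq> set (snd (st d (h @ [e])))" unfolding stn by (rule upd_sub)
  have tt: "t \<le> Suc t" by simp
  have les: "ln (vol d (KS d (Suc t) (fst (st d (h @ [e]))))) \<le> ln (vol d (KS d t (fst (st d h))))"
    by (rule lnvol_le[OF s g1s d subs tt])
  have leb: "ln (vol d (KS d (Suc t) (snd (st d (h @ [e]))))) \<le> ln (vol d (KS d t (snd (st d h))))"
    by (rule lnvol_le[OF b g1b d subb tt])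
  show "Psi d (h @ [e]) \<le> Psi d h" unfolding Psi_def len using les leb unfolding t_def by simp
  show "Psi d (h @ [e]) \<le> Psi d h - (1/5) ^ d" if c: "((x, M, True) \<in> set (fst (st d (h @ [e]))) \<and> (1/5) * (hi d (length h) (fst (st d h)) x - lo d (length h) (fst (st d h)) x) < hi d (length h) (fst (st d h)) x - M - rr (length h)) \<or>
         ((x, M, False) \<in> set (fst (st d (h @ [e]))) \<and> (1/5) * (hi d (length h) (fst (st d h)) x - lo d (length h) (fst (st d h)) x) < M - rr (length h) - lo d (length h) (fst (st d h)) x)"
  proof -
    have "ln (vol d (KS d (Suc t) (fst (st d (h @ [e]))))) \<le> ln (vol d (KS d t (fst (st d h)))) - (1/5) ^ d"
      by (rule lnvol_cut[OF s g1s d subs tt x]) (use c in \<open>unfold t_def\<close>)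
    then show ?thesis unfolding Psi_def len using leb unfolding t_def by simp
  qed
  show "Psi d (h @ [e]) \<le> Psi d h - (1/5) ^ d" if c: "((x, M, True) \<in> set (snd (st d (h @ [e]))) \<and> (1/5) * (hi d (length h) (snd (st d h)) x - lo d (length h) (snd (st d h)) x) < hi d (length h) (snd (st d h)) x - M - rr (length h)) \<or>
         ((x, M, False) \<in> set (snd (st d (h @ [e]))) \<and> (1/5) * (hi d (length h) (snd (st d h)) x - lo d (length h) (snd (st d h)) x) < M - rr (length h) - lo d (length h) (snd (st d h)) x)"
  proof -
    have "ln (vol d (KS d (Suc t) (snd (st d (h @ [e]))))) \<le> ln (vol d (KS d t (snd (st d h)))) - (1/5) ^ d"
      by (rule lnvol_cut[OF b g1b d subb tt x]) (use c in \<open>unfold t_def\<close>)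
    then show ?thesis unfolding Psi_def len using les unfolding t_def by simp
  qed
qed

definition evt :: "nat \<Rightarrow> vec \<Rightarrow> vec \<Rightarrow> vec \<Rightarrow> real \<times> real \<Rightarrow> vec \<times> real \<times> real \<times> bool" where
  "evt d s b x pq = (x, fst pq, snd pq, ip d s x \<le> fst pq \<and> snd pq \<le> ip d b x)"

definition pr :: "nat \<Rightarrow> vec \<Rightarrow> vec \<Rightarrow> vec \<Rightarrow> real \<times> real \<Rightarrow> real" where
  "pr d s b x pq = (if ip d s x \<le> fst pq \<and> snd pq \<le> ip d b x then snd pq - fst pq else 0)"

lemma lo_ge:
  assumes "f0 \<in> KS d t F" "x \<in> unit_ball d"
  shows "lo d t F x \<ge> - (real d * 2)"
  unfolding lo_def
proof (rule cInf_greatest)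
  show "(\<lambda>f. ip d f x) ` KS d t F \<noteq> {}" using assms by auto
  fix y assume "y \<in> (\<lambda>f. ip d f x) ` KS d t F"
  then show "- (real d * 2) \<le> y" using KS_ip_bound[OF _ assms(2)] by (force simp: abs_le_iff)
qed

lemma hi_le:
  assumes "f0 \<in> KS d t F" "x \<in> unit_ball d"
  shows "hi d t F x \<le> real d * 2"
  unfolding hi_def
proof (rule cSup_least)
  show "(\<lambda>f. ip d f x) ` KS d t F \<noteq> {}" using assms by auto
  fix y assume "y \<in> (\<lambda>f. ip d f x) ` KS d t F"
  then show "y \<le> real d * 2" using KS_ip_bound[OF _ assms(2)] by (force simp: abs_le_iff)
qed

lemma truth_bound:
  assumes "v \<in> unit_ball d" "x \<in> unit_ball d"
  shows "\<bar>ip d v x\<bar> \<le> real d"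
  using ip_bound[of d v 1 x] unit_ball_coord[OF assms(1)] assms(2) by simp


lemma W_arg:
  fixes a1 a2 b1 b2 e M :: real
  assumes "e > 0" "\<not> (a2 - a1 \<le> e \<and> b2 - b1 \<le> e)" "\<not> (a2 - a1 > e \<and> a1 + (a2 - a1) / 3 \<le> b1)"
    "\<not> (b2 - b1 > e \<and> a2 \<le> b2 - (b2 - b1) / 3)" "a1 \<le> a2" "b1 \<le> b2"
  shows "(1/5) * (a2 - a1) < a2 - M - e / 16 \<or> (1/5) * (b2 - b1) < M - e / 16 - b1"
proof (cases "b2 - b1 \<le> a2 - a1")
  case True
  then have w: "a2 - a1 > e" using assms(2) by auto
  then have "b1 < a1 + (a2 - a1) / 3" using assms(3) by auto
  then show ?thesis using True w assms(1) by (auto simp: field_simps)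
next
  case False
  then have w: "b2 - b1 > e" using assms(2) by auto
  then have "a2 > b2 - (b2 - b1) / 3" using assms(4) by auto
  then show ?thesis using False w assms(1) by (auto simp: field_simps)
qed

lemma round:
  assumes d: "d \<ge> 1" and s: "s \<in> unit_ball d" and b: "b \<in> unit_ball d" and x: "x \<in> unit_ball d"
    and g: "good d s b h" and K: "K \<ge> 16 * real d * 5 ^ d"
  shows "measure_pmf.expectation (alg d h x) (\<lambda>pq. pr d s b x pq - K * Psi d (h @ [evt d s b x pq]))
     \<ge> max 0 (ip d b x - ip d s x) - 2 * eps (length h) - K * Psi d h"
proof -
  define t where "t = length h"
  define Fs where "Fs = fst (st d h)"
  define Fb where "Fb = snd (st d h)"
  define a1 where "a1 = lo d t Fs x"
  define a2 where "a2 = hi d t Fs x"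
  define b1 where "b1 = lo d t Fb x"
  define b2 where "b2 = hi d t Fb x"
  define e where "e = eps t"
  define sv where "sv = ip d s x"
  define bv where "bv = ip d b x"
  define Q where "Q = (\<lambda>pq. pr d s b x pq - K * Psi d (h @ [evt d s b x pq]))"
  define gain where "gain = max 0 (bv - sv)"
  have alg_eq: "alg d h x = act e a1 a2 b1 b2"
    unfolding alg_def a1_def a2_def b1_def b2_def e_def t_def Fs_def Fb_def ..
  have gs: "sound d s Fs" and gb: "sound d b Fb" using g unfolding good_def Fs_def Fb_def by auto
  have e0: "e > 0" unfolding e_def eps_def by simp
  have rre: "rr t = e / 16" unfolding rr_def e_def eps_def by simp
  have sa: "a1 \<le> sv" "sv \<le> a2" unfolding a1_def a2_def sv_def using truth_range[OF s gs d x] by auto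
  have bb: "b1 \<le> bv" "bv \<le> b2" unfolding b1_def b2_def bv_def using truth_range[OF b gb d x] by auto
  have a1g: "a1 \<ge> - (real d * 2)" unfolding a1_def by (rule lo_ge[OF restrict_in_KS[OF s gs d] x])
  have b2g: "b2 \<le> real d * 2" unfolding b2_def by (rule hi_le[OF restrict_in_KS[OF b gb d] x])
  have svb: "\<bar>sv\<bar> \<le> real d" unfolding sv_def by (rule truth_bound[OF s x])
  have bvb: "\<bar>bv\<bar> \<le> real d" unfolding bv_def by (rule truth_bound[OF b x])
  have K0: "K \<ge> 0" using K by (meson order_trans zero_le_mult_iff zero_le_numeral zero_le_power of_nat_0_le_iff)
  have Kc: "K * (1/5) ^ d \<ge> 16 * real d"
  proof -
    have "K * (1/5) ^ d \<ge> 16 * real d * 5 ^ d * (1/5) ^ d" using K by (intro mult_right_mono) auto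
    also have "16 * real d * 5 ^ d * (1/5::real) ^ d = 16 * real d" by (simp add: power_one_over)
    finally show ?thesis .
  qed
  have Qgen: "Q pq \<ge> pr d s b x pq - K * Psi d h" for pq
  proof -
    have "Psi d (h @ [evt d s b x pq]) \<le> Psi d h"
      by (rule psi_step(1)[OF d s b x g]) (simp add: evt_def)
    then show ?thesis unfolding Q_def using K0 by (simp add: mult_left_mono)
  qed
  have Qcut: "Q pq \<ge> pr d s b x pq - K * Psi d h + 16 * real d"
    if "Psi d (h @ [evt d s b x pq]) \<le> Psi d h - (1/5) ^ d" for pq
  proof -
    have "K * Psi d (h @ [evt d s b x pq]) \<le> K * (Psi d h - (1/5) ^ d)" using that K0 by (rule mult_left_mono)
    then show ?thesis unfolding Q_def using Kc by (simp add: right_diff_distrib)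
  qed
  have stn: "st d (h @ [evt d s b x pq]) = upd d t (st d h) (evt d s b x pq)" for pq
    unfolding t_def by (rule st_snoc)
  have cutS: "Psi d (h @ [evt d s b x pq]) \<le> Psi d h - (1/5) ^ d"
    if "((x, M, True) \<in> set (fst (st d (h @ [evt d s b x pq]))) \<and> (1/5) * (a2 - a1) < a2 - M - rr t) \<or>
         ((x, M, False) \<in> set (fst (st d (h @ [evt d s b x pq]))) \<and> (1/5) * (a2 - a1) < M - rr t - a1)" for pq M
    by (rule psi_step(2)[OF d s b x g, of "evt d s b x pq" "fst pq" "snd pq" M])
       (use that in \<open>simp_all add: evt_def a1_def a2_def Fs_def t_def sv_def bv_def\<close>)
  have cutB: "Psi d (h @ [evt d s b x pq]) \<le> Psi d h - (1/5) ^ d"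
    if "((x, M, True) \<in> set (snd (st d (h @ [evt d s b x pq]))) \<and> (1/5) * (b2 - b1) < b2 - M - rr t) \<or>
         ((x, M, False) \<in> set (snd (st d (h @ [evt d s b x pq]))) \<and> (1/5) * (b2 - b1) < M - rr t - b1)" for pq M
    by (rule psi_step(3)[OF d s b x g, of "evt d s b x pq" "fst pq" "snd pq" M])
       (use that in \<open>simp_all add: evt_def b1_def b2_def Fb_def t_def sv_def bv_def\<close>)
  have gain_le: "gain \<le> 2 * real d" unfolding gain_def using svb bvb by (auto simp: abs_le_iff)
  have goal_eq: "max 0 (ip d b x - ip d s x) - 2 * eps (length h) - K * Psi d h = gain - 2 * e - K * Psi d h"
    unfolding gain_def sv_def bv_def e_def t_def ..
  show ?thesis
    unfolding goal_eq alg_eq Q_def[symmetric]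
  proof -
    have b1e: "b1 = lo d t (snd (st d h)) x" unfolding b1_def Fb_def ..
    have a2e: "a2 = hi d t (fst (st d h)) x" unfolding a2_def Fs_def ..
    have pr00: "pr d s b x (0, 0) = 0" unfolding pr_def by simp
    consider (c0) "b2 - a1 \<le> e"
      | (cE) "\<not> b2 - a1 \<le> e" "a2 - a1 \<le> e \<and> b2 - b1 \<le> e"
      | (c1) "\<not> b2 - a1 \<le> e" "\<not> (a2 - a1 \<le> e \<and> b2 - b1 \<le> e)" "a2 - a1 > e \<and> a1 + (a2 - a1) / 3 \<le> b1"
      | (c2) "\<not> b2 - a1 \<le> e" "\<not> (a2 - a1 \<le> e \<and> b2 - b1 \<le> e)" "\<not> (a2 - a1 > e \<and> a1 + (a2 - a1) / 3 \<le> b1)"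
             "b2 - b1 > e \<and> a2 \<le> b2 - (b2 - b1) / 3"
      | (c3) "\<not> b2 - a1 \<le> e" "\<not> (a2 - a1 \<le> e \<and> b2 - b1 \<le> e)" "\<not> (a2 - a1 > e \<and> a1 + (a2 - a1) / 3 \<le> b1)"
             "\<not> (b2 - b1 > e \<and> a2 \<le> b2 - (b2 - b1) / 3)"
      by argo
    then show "measure_pmf.expectation (act e a1 a2 b1 b2) Q \<ge> gain - 2 * e - K * Psi d h"
    proof cases
      case c0
      then have "act e a1 a2 b1 b2 = return_pmf (0, 0)" unfolding act_def by simp
      moreover have "gain \<le> 2 * e" unfolding gain_def using c0 sa bb e0 by linarith
      ultimately show ?thesis using Qgen[of "(0, 0)"] pr00 by simp
    next
      case cE
      show ?thesis
      proof (cases "a2 \<le> b1")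
        case True
        then have "act e a1 a2 b1 b2 = return_pmf (a2, b1)" using cE unfolding act_def by simp
        moreover have "pr d s b x (a2, b1) = b1 - a2" unfolding pr_def using sa bb unfolding sv_def bv_def by simp
        moreover have "gain = bv - sv" unfolding gain_def using True sa bb by simp
        ultimately show ?thesis using Qgen[of "(a2, b1)"] cE sa bb by simp
      next
        case False
        then have "act e a1 a2 b1 b2 = return_pmf (0, 0)" using cE unfolding act_def by simp
        moreover have "gain \<le> 2 * e" unfolding gain_def using cE False sa bb e0 by linarith
        ultimately show ?thesis using Qgen[of "(0, 0)"] pr00 by simp
      qed
    next
      case c1
      have c1a: "e < a2 - a1" and c1b: "a1 + (a2 - a1) / 3 \<le> b1" using c1 by auto
      define m where "m = min ((a1 + a2) / 2) b1"
      have act: "act e a1 a2 b1 b2 = return_pmf (m, b1)" using c1 unfolding act_def m_def by simp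
      have pr0: "pr d s b x (m, b1) \<ge> 0" unfolding pr_def m_def by simp
      have m1: "m \<le> (a1 + a2) / 2" unfolding m_def by (rule min.cobounded1)
      have m2: "m \<ge> a1 + (a2 - a1) / 3" unfolding m_def
      proof (rule min.boundedI)
        show "a1 + (a2 - a1) / 3 \<le> (a1 + a2) / 2" using c1a e0 by (simp add: field_simps)
        show "a1 + (a2 - a1) / 3 \<le> b1" using c1b by (simp add: field_simps)
      qed
      have "Psi d (h @ [evt d s b x (m, b1)]) \<le> Psi d h - (1/5) ^ d"
      proof (cases "sv \<le> m")
        case True
        have "(x, m, True) \<in> set (fst (st d (h @ [evt d s b x (m, b1)])))"
          using True bb unfolding sv_def bv_def by (simp add: st_snoc upd_def evt_def t_def[symmetric])
        moreover have "(1/5) * (a2 - a1) < a2 - m - rr t" unfolding rre using c1a e0 m1 m2 by (simp add: field_simps)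
        ultimately show ?thesis by (intro cutS) auto
      next
        case False
        have "(x, m, False) \<in> set (fst (st d (h @ [evt d s b x (m, b1)])))"
          using False bb unfolding sv_def bv_def by (simp add: st_snoc upd_def evt_def t_def[symmetric] b1e[symmetric])
        moreover have "(1/5) * (a2 - a1) < m - rr t - a1" unfolding rre using c1a e0 m1 m2 by (simp add: field_simps)
        ultimately show ?thesis by (intro cutS) auto
      qed
      then have "Q (m, b1) \<ge> pr d s b x (m, b1) - K * Psi d h + 16 * real d" by (rule Qcut)
      then show ?thesis unfolding act using pr0 gain_le e0 d by simp
    next
      case c2
      have c2a: "e < b2 - b1" and c2b: "a2 \<le> b2 - (b2 - b1) / 3" using c2 by auto
      define m where "m = max ((b1 + b2) / 2) a2"
      have act: "act e a1 a2 b1 b2 = return_pmf (a2, m)" using c2 unfolding act_def m_def by auto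
      have pr0: "pr d s b x (a2, m) \<ge> 0" unfolding pr_def m_def by simp
      have m1: "m \<ge> (b1 + b2) / 2" unfolding m_def by (rule max.cobounded1)
      have m2: "m \<le> b2 - (b2 - b1) / 3" unfolding m_def
      proof (rule max.boundedI)
        show "(b1 + b2) / 2 \<le> b2 - (b2 - b1) / 3" using c2a e0 by (simp add: field_simps)
        show "a2 \<le> b2 - (b2 - b1) / 3" using c2b by (simp add: field_simps)
      qed
      have "Psi d (h @ [evt d s b x (a2, m)]) \<le> Psi d h - (1/5) ^ d"
      proof (cases "m \<le> bv")
        case True
        have "(x, m, False) \<in> set (snd (st d (h @ [evt d s b x (a2, m)])))"
          using True sa unfolding sv_def bv_def by (simp add: st_snoc upd_def evt_def t_def[symmetric])
        moreover have "(1/5) * (b2 - b1) < m - rr t - b1" unfolding rre using c2a e0 m1 m2 by (simp add: field_simps)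
        ultimately show ?thesis by (intro cutB) auto
      next
        case False
        have mb1: "\<not> m \<le> b1" using c2a e0 m1 by (simp add: field_simps)
        have "(x, m, True) \<in> set (snd (st d (h @ [evt d s b x (a2, m)])))"
          using False sa mb1 unfolding sv_def bv_def by (simp add: st_snoc upd_def evt_def t_def[symmetric] b1e[symmetric] a2e[symmetric])
        moreover have "(1/5) * (b2 - b1) < b2 - m - rr t" unfolding rre using c2a e0 m1 m2 by (simp add: field_simps)
        ultimately show ?thesis by (intro cutB) auto
      qed
      then have "Q (a2, m) \<ge> pr d s b x (a2, m) - K * Psi d h + 16 * real d" by (rule Qcut)
      then show ?thesis unfolding act using pr0 gain_le e0 d by simp
    next
      case c3
      define G where "G = b2 - a1"
      define N where "N = Ngrid G e"
      define gp where "gp = gridp a1 G N"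
      have act: "act e a1 a2 b1 b2 = map_pmf gp (pmf_of_set {0..N})"
        using c3 unfolding act_def gp_def N_def G_def by auto
      have ne: "{0..N} \<noteq> {}" by simp
      have fin: "finite {0..N}" by simp
      have E: "measure_pmf.expectation (act e a1 a2 b1 b2) Q = (\<Sum>j\<in>{0..N}. Q (gp j)) / real (N + 1)"
        unfolding act by (simp add: integral_pmf_of_set[OF ne fin])
      have pr0: "pr d s b x (gp j) = 0" for j unfolding pr_def gp_def gridp_def by simp
      have Qj: "Q (gp j) \<ge> - K * Psi d h" for j using Qgen[of "gp j"] pr0[of j] by simp
      have Np: "real (N + 1) > 0" by simp
      have avg: "(\<Sum>j\<in>{0..N}. Q (gp j)) / real (N + 1) \<ge> c"
        if "\<And>j. j \<in> {0..N} \<Longrightarrow> Q (gp j) \<ge> c + f j" "\<And>j. f j \<ge> 0" "(\<Sum>j\<in>{0..N}. f j) \<ge> 0" for c f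
      proof -
        have "(\<Sum>j\<in>{0..N}. c + f j) \<le> (\<Sum>j\<in>{0..N}. Q (gp j))" using that(1) by (rule sum_mono)
        moreover have "(\<Sum>j\<in>{0..N}. c + f j) = real (N + 1) * c + (\<Sum>j\<in>{0..N}. f j)"
          by (simp add: sum.distrib)
        ultimately have "real (N + 1) * c \<le> (\<Sum>j\<in>{0..N}. Q (gp j))" using that(3) by linarith
        then show ?thesis using Np by (simp add: le_divide_eq mult.commute)
      qed
      show ?thesis
      proof (cases "gain \<le> e")
        case True
        have "(\<Sum>j\<in>{0..N}. Q (gp j)) / real (N + 1) \<ge> - K * Psi d h"
          by (rule avg[where f="\<lambda>_. 0"]) (use Qj in auto)
        then show ?thesis unfolding E using True e0 by simp
      next
        case False
        then have gv: "bv - sv > e" "gain = bv - sv" unfolding gain_def using e0 by auto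
        define J where "J = {j \<in> {0..N}. sv \<le> a1 + real j * G / real N \<and> a1 + real j * G / real N \<le> bv}"
        have cJ: "real (card J) \<ge> (3/8) * ((bv - sv) / G) * real (N + 1)"
          unfolding J_def N_def
          by (rule grid_count) (use sa bb gv e0 in \<open>auto simp: G_def\<close>)
        have Gp: "G > 0" using c3 e0 unfolding G_def by linarith
        have G4: "G \<le> 4 * real d" using a1g b2g unfolding G_def by linarith
        have Qj2: "Q (gp j) \<ge> - K * Psi d h + (if j \<in> J then 16 * real d else 0)" for j
        proof (cases "j \<in> J")
          case False then show ?thesis using Qj[of j] by simp
        next
          case True
          define M where "M = a1 + real j * G / real N"
          have gpj: "gp j = (M, M)" unfolding gp_def gridp_def M_def ..
          have tr: "sv \<le> M" "M \<le> bv" using True unfolding J_def M_def by auto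
          have inS: "(x, M, True) \<in> set (fst (st d (h @ [evt d s b x (M, M)])))"
            using tr unfolding sv_def bv_def by (simp add: st_snoc upd_def evt_def)
          have inB: "(x, M, False) \<in> set (snd (st d (h @ [evt d s b x (M, M)])))"
            using tr unfolding sv_def bv_def by (simp add: st_snoc upd_def evt_def)
          have ord: "a1 \<le> a2" "b1 \<le> b2" using sa bb by auto
          have W: "(1/5) * (a2 - a1) < a2 - M - e / 16 \<or> (1/5) * (b2 - b1) < M - e / 16 - b1"
            by (rule W_arg[OF e0 c3(2) c3(3) c3(4) ord])
          have "Psi d (h @ [evt d s b x (M, M)]) \<le> Psi d h - (1/5) ^ d"
            using W
          proof
            assume "(1/5) * (a2 - a1) < a2 - M - e / 16"
            then show ?thesis using inS by (intro cutS) (auto simp: rre)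
          next
            assume "(1/5) * (b2 - b1) < M - e / 16 - b1"
            then show ?thesis using inB by (intro cutB) (auto simp: rre)
          qed
          then have "Q (M, M) \<ge> pr d s b x (M, M) - K * Psi d h + 16 * real d" by (rule Qcut)
          then show ?thesis using True pr0[of j] unfolding gpj by simp
        qed
        have sumJ: "(\<Sum>j\<in>{0..N}. (if j \<in> J then 16 * real d else 0)) = 16 * real d * real (card J)"
        proof -
          have "J \<subseteq> {0..N}" unfolding J_def by auto
          then have "{0..N} \<inter> {j. j \<in> J} = J" by auto
          then show ?thesis by (simp add: sum.If_cases)
        qed
        define c where "c = - K * Psi d h + 16 * real d * real (card J) / real (N + 1)"
        have "(\<Sum>j\<in>{0..N}. Q (gp j)) / real (N + 1) \<ge> c"
        proof -
          have "(\<Sum>j\<in>{0..N}. - K * Psi d h + (if j \<in> J then 16 * real d else 0)) \<le> (\<Sum>j\<in>{0..N}. Q (gp j))"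
            using Qj2 by (rule sum_mono)
          moreover have "(\<Sum>j\<in>{0..N}. - K * Psi d h + (if j \<in> J then 16 * real d else 0)) = real (N + 1) * (- K * Psi d h) + 16 * real d * real (card J)"
            by (subst sum.distrib) (simp add: sumJ)
          moreover have "real (N + 1) * c = real (N + 1) * (- K * Psi d h) + 16 * real d * real (card J)"
            unfolding c_def using Np by (simp add: right_diff_distrib distrib_left)
          ultimately have "real (N + 1) * c \<le> (\<Sum>j\<in>{0..N}. Q (gp j))" by linarith
          then show ?thesis using Np by (simp add: le_divide_eq mult.commute)
        qed
        moreover have "16 * real d * real (card J) / real (N + 1) \<ge> bv - sv"
        proof -
          have "16 * real d * real (card J) / real (N + 1) \<ge> 16 * real d * ((3/8) * ((bv - sv) / G) * real (N + 1)) / real (N + 1)"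
            using cJ Np by (intro divide_right_mono mult_left_mono) auto
          also have "16 * real d * ((3/8) * ((bv - sv) / G) * real (N + 1)) / real (N + 1) = 6 * real d * (bv - sv) / G"
            using Np by simp
          also have "6 * real d * (bv - sv) / G \<ge> bv - sv"
          proof -
            have "G * (bv - sv) \<le> 6 * real d * (bv - sv)" using G4 gv e0 by (intro mult_right_mono) auto
            then show ?thesis using Gp by (simp add: le_divide_eq mult.commute)
          qed
          finally show ?thesis .
        qed
        ultimately show ?thesis unfolding E c_def using gv e0 by linarith
      qed
    qed
  qed
qed

lemma exp_sum:
  fixes f :: "'a \<Rightarrow> real"
  assumes "finite (set_pmf p)"
  shows "measure_pmf.expectation p f = (\<Sum>h\<in>set_pmf p. pmf p h * f h)"
  by (subst integral_measure_pmf[of "set_pmf p"]) (use assms in auto)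

lemma exp_mono_supp:
  fixes f g :: "'a \<Rightarrow> real"
  assumes "finite (set_pmf p)" "\<And>h. h \<in> set_pmf p \<Longrightarrow> f h \<le> g h"
  shows "measure_pmf.expectation p f \<le> measure_pmf.expectation p g"
  unfolding exp_sum[OF assms(1)] by (intro sum_mono mult_left_mono) (auto simp: assms(2))

lemma exp_add_const:
  fixes f :: "'a \<Rightarrow> real"
  assumes "finite (set_pmf p)"
  shows "measure_pmf.expectation p (\<lambda>h. f h + c) = measure_pmf.expectation p f + c"
proof -
  have "(\<Sum>h\<in>set_pmf p. pmf p h * (f h + c)) = (\<Sum>h\<in>set_pmf p. pmf p h * f h) + c * (\<Sum>h\<in>set_pmf p. pmf p h)"
    by (simp add: distrib_left sum.distrib sum_distrib_left mult.commute)
  also have "(\<Sum>h\<in>set_pmf p. pmf p h) = 1" by (rule sum_pmf_eq_1) (use assms in auto)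
  finally show ?thesis unfolding exp_sum[OF assms] by simp
qed

lemma exp_add:
  fixes f g :: "'a \<Rightarrow> real"
  assumes "finite (set_pmf p)"
  shows "measure_pmf.expectation p (\<lambda>h. f h + g h) = measure_pmf.expectation p f + measure_pmf.expectation p g"
  unfolding exp_sum[OF assms] by (simp add: distrib_left sum.distrib)

lemma exp_const:
  assumes "finite (set_pmf p)"
  shows "measure_pmf.expectation p (\<lambda>h. c::real) = c"
  using exp_add_const[OF assms, of "\<lambda>_. 0" c] unfolding exp_sum[OF assms] by simp

lemma hist_profit_snoc: "hist_profit (h @ [(y, p, q, f)]) = hist_profit h + (if f then q - p else 0)"
  unfolding hist_profit_def by simp

definition Phi :: "nat \<Rightarrow> real \<Rightarrow> hist \<Rightarrow> real" where
  "Phi d K h = hist_profit h - K * Psi d h"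

lemma run_Phi:
  assumes d: "d \<ge> 1" and s: "s \<in> unit_ball d" and b: "b \<in> unit_ball d" and x: "\<And>t. x t \<in> unit_ball d"
    and K: "K \<ge> 16 * real d * 5 ^ d"
  shows "measure_pmf.expectation (run d (alg d) s b x T) (Phi d K)
     \<ge> - K * Psi d [] + (\<Sum>t<T. max 0 (ip d b (x t) - ip d s (x t)) - 2 * eps t)"
proof (induction T)
  case 0
  show ?case by (simp add: Phi_def hist_profit_def)
next
  case (Suc t)
  define c where "c = max 0 (ip d b (x t) - ip d s (x t)) - 2 * eps t"
  let ?R = "run d (alg d) s b x t"
  have fin: "finite (set_pmf ?R)" by (rule run_finite)
  have inner: "measure_pmf.expectation (bind_pmf (alg d h (x t)) (\<lambda>pq. return_pmf (h @ [(x t, fst pq, snd pq, ip d s (x t) \<le> fst pq \<and> snd pq \<le> ip d b (x t))]))) (Phi d K)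
      \<ge> Phi d K h + c" if h: "h \<in> set_pmf ?R" for h
  proof -
    have lh: "length h = t" using run_length[OF h] .
    have gh: "good d s b h" by (rule run_good[OF s b d x h])
    have finA: "finite (set_pmf (alg d h (x t)))" unfolding alg_def by (rule act_finite)
    have eq1: "bind_pmf (alg d h (x t)) (\<lambda>pq. return_pmf (h @ [(x t, fst pq, snd pq, ip d s (x t) \<le> fst pq \<and> snd pq \<le> ip d b (x t))]))
        = map_pmf (\<lambda>pq. h @ [evt d s b (x t) pq]) (alg d h (x t))"
      by (simp add: map_pmf_def evt_def)
    have eq2: "Phi d K (h @ [evt d s b (x t) pq]) = (pr d s b (x t) pq - K * Psi d (h @ [evt d s b (x t) pq])) + hist_profit h" for pq
      unfolding Phi_def evt_def pr_def by (simp add: hist_profit_snoc)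
    have "measure_pmf.expectation (alg d h (x t)) (\<lambda>pq. pr d s b (x t) pq - K * Psi d (h @ [evt d s b (x t) pq]))
       \<ge> max 0 (ip d b (x t) - ip d s (x t)) - 2 * eps (length h) - K * Psi d h"
      by (rule round[OF d s b x gh K])
    moreover have "measure_pmf.expectation (map_pmf (\<lambda>pq. h @ [evt d s b (x t) pq]) (alg d h (x t))) (Phi d K)
       = measure_pmf.expectation (alg d h (x t)) (\<lambda>pq. (pr d s b (x t) pq - K * Psi d (h @ [evt d s b (x t) pq])) + hist_profit h)"
      by (simp only: integral_map_pmf eq2)
    moreover have "\<dots> = measure_pmf.expectation (alg d h (x t)) (\<lambda>pq. pr d s b (x t) pq - K * Psi d (h @ [evt d s b (x t) pq])) + hist_profit h"
      by (rule exp_add_const[OF finA])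
    ultimately show ?thesis unfolding eq1 c_def Phi_def lh by linarith
  qed
  have "measure_pmf.expectation (run d (alg d) s b x (Suc t)) (Phi d K)
      = (\<Sum>h\<in>set_pmf ?R. pmf ?R h * measure_pmf.expectation (bind_pmf (alg d h (x t)) (\<lambda>pq. return_pmf (h @ [(x t, fst pq, snd pq, ip d s (x t) \<le> fst pq \<and> snd pq \<le> ip d b (x t))]))) (Phi d K))"
    unfolding run_Suc by (subst pmf_expectation_bind[OF fin]) (auto simp: act_finite alg_def)
  also have "\<dots> \<ge> (\<Sum>h\<in>set_pmf ?R. pmf ?R h * (Phi d K h + c))"
    by (intro sum_mono mult_left_mono inner) auto
  also have "(\<Sum>h\<in>set_pmf ?R. pmf ?R h * (Phi d K h + c)) = measure_pmf.expectation ?R (Phi d K) + c"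
    using exp_add_const[OF fin, of "Phi d K" c] unfolding exp_sum[OF fin] .
  finally show ?case using Suc.IH unfolding c_def by simp
qed


lemma sum_eps: "(\<Sum>t<T. eps t) = harm T"
  by (induction T) (simp_all add: eps_def harm_Suc add.commute inverse_eq_divide harm_def)

lemma regret_bound:
  assumes d: "d \<ge> 1" and s: "s \<in> unit_ball d" and b: "b \<in> unit_ball d" and x: "\<And>t. x t \<in> unit_ball d"
  shows "regret d (alg d) s b x T \<le> 2 * harm T + 32 * real d ^ 2 * 5 ^ d * ln (32 * real d * (real T + 1))"
proof -
  define K where "K = 16 * real d * 5 ^ d"
  have K: "K \<ge> 16 * real d * 5 ^ d" unfolding K_def by simp
  have K0: "K \<ge> 0" unfolding K_def by simp
  let ?R = "run d (alg d) s b x T"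
  have fin: "finite (set_pmf ?R)" by (rule run_finite)
  define L where "L = d * ln (2 * (rr T / real d))"
  have Psi_low: "Psi d h \<ge> 2 * L" if h: "h \<in> set_pmf ?R" for h
  proof -
    have lh: "length h = T" using run_length[OF h] .
    have gh: "good d s b h" by (rule run_good[OF s b d x h])
    have low: "ln (vol d (KS d T F)) \<ge> L" if "sound d v F" "v \<in> unit_ball d" for v F
    proof -
      have p: "0 < (2 * (rr T / real d)) ^ d" using rr_pos[of T] d by simp
      have "ln ((2 * (rr T / real d)) ^ d) \<le> ln (vol d (KS d T F))"
        using vol_lower[OF that(2) that(1) d, of T] p by simp
      moreover have "ln ((2 * (rr T / real d)) ^ d) = L" unfolding L_def
        using rr_pos[of T] d by (simp add: ln_realpow)
      ultimately show ?thesis by simp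
    qed
    show ?thesis unfolding Psi_def lh using low[of s "fst (st d h)"] low[of b "snd (st d h)"] gh s b
      unfolding good_def by simp
  qed
  have Psi0: "Psi d [] \<le> 2 * (d * ln 4)"
  proof -
    have "ln (vol d (KS d 0 [])) \<le> ln (4 ^ d)"
      using vol_upper[OF d, of 0 "[]"] vol_pos[OF s _ d, of "[]" 0] by (simp add: sound_def)
    then show ?thesis unfolding Psi_def by (simp add: st_Nil ln_realpow)
  qed
  have hp: "hist_profit h = Phi d K h + K * Psi d h" for h unfolding Phi_def by simp
  have "measure_pmf.expectation ?R hist_profit = measure_pmf.expectation ?R (Phi d K) + measure_pmf.expectation ?R (\<lambda>h. K * Psi d h)"
    unfolding hp by (rule exp_add[OF fin])
  moreover have "measure_pmf.expectation ?R (\<lambda>h. K * Psi d h) \<ge> measure_pmf.expectation ?R (\<lambda>h. K * (2 * L))"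
    using Psi_low K0 by (intro exp_mono_supp[OF fin] mult_left_mono) auto
  moreover have "measure_pmf.expectation ?R (\<lambda>h. K * (2 * L)) = K * (2 * L)" by (rule exp_const[OF fin])
  moreover have "measure_pmf.expectation ?R (Phi d K) \<ge> - K * Psi d [] + (\<Sum>t<T. max 0 (ip d b (x t) - ip d s (x t)) - 2 * eps t)"
    by (rule run_Phi[OF d s b x K])
  moreover have "(\<Sum>t<T. max 0 (ip d b (x t) - ip d s (x t)) - 2 * eps t) = (\<Sum>t<T. max 0 (ip d b (x t) - ip d s (x t))) - 2 * harm T"
    by (simp add: sum_subtractf sum_distrib_left[symmetric] sum_eps)
  moreover have "K * Psi d [] \<le> K * (2 * (d * ln 4))" using Psi0 K0 by (rule mult_left_mono)
  ultimately have "regret d (alg d) s b x T \<le> 2 * harm T + K * (2 * (d * ln 4) - 2 * L)"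
    unfolding regret_def by (simp add: right_diff_distrib)
  also have "2 * (d * ln 4) - 2 * L = 2 * d * ln (32 * real d * (real T + 1))"
  proof -
    have "ln 4 - ln (2 * (rr T / real d)) = ln (4 / (2 * (rr T / real d)))"
      using rr_pos[of T] d by (subst ln_div) auto
    also have "4 / (2 * (rr T / real d)) = 32 * real d * (real T + 1)"
      unfolding rr_def using d by (simp add: field_simps)
    finally have E: "ln 4 - ln (2 * (rr T / real d)) = ln (32 * real d * (real T + 1))" .
    show ?thesis unfolding L_def E[symmetric] by (simp add: algebra_simps)
  qed
  finally show ?thesis unfolding K_def by (simp add: power2_eq_square algebra_simps)
qed

lemma ln_ge_1_minus_inv: "(x::real) > 0 \<Longrightarrow> ln x \<ge> 1 - 1 / x"
  using ln_le_minus_one[of "1 / x"] by (simp add: ln_div)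

lemma d_sq_bound: "real d ^ 2 \<le> 5832 * (6/5) ^ d"
proof -
  have l: "ln (6/5::real) \<ge> 1/6" using ln_ge_1_minus_inv[of "6/5"] by simp
  have "(6/5::real) ^ d = exp (ln (6/5)) ^ d" by simp
  also have "\<dots> = exp (real d * ln (6/5))" by (simp add: exp_of_nat_mult)
  also have "\<dots> \<ge> exp (real d * (1/6))" using l by (intro exp_le_cancel_iff[THEN iffD2] mult_left_mono) auto
  finally have a: "(6/5::real) ^ d \<ge> exp (real d / 6)" by simp
  have "exp (real d / 6) = exp (real d / 18) ^ 3"
    using exp_of_nat_mult[of 3 "real d / 18"] by simp
  also have "exp (real d / 18) ^ 3 \<ge> (real d / 18) ^ 3"
  proof (rule power_mono)
    show "real d / 18 \<le> exp (real d / 18)" using exp_ge_add_one_self[of "real d / 18"] by linarith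
  qed simp
  finally have b: "(6/5::real) ^ d \<ge> (real d / 18) ^ 3" using a by linarith
  have c: "real d ^ 2 \<le> real d ^ 3 + 1"
  proof (cases "d = 0")
    case False
    then have "real d \<ge> 1" by simp
    then have "real d ^ 2 * 1 \<le> real d ^ 2 * real d" by (intro mult_left_mono) auto
    then show ?thesis by (simp add: power3_eq_cube power2_eq_square)
  qed simp
  show ?thesis
  proof (cases "d = 0")
    case True then show ?thesis by simp
  next
    case False
    then have "real d \<ge> 1" by simp
    then have "real d ^ 2 \<le> real d ^ 3"
      using mult_left_mono[of 1 "real d" "real d ^ 2"] by (simp add: power3_eq_cube power2_eq_square)
    also have "\<dots> = 5832 * (real d / 18) ^ 3" by (simp add: power_divide)
    also have "\<dots> \<le> 5832 * (6/5) ^ d" using b by simp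
    finally show ?thesis .
  qed
qed


lemma final_numeric:
  assumes d: "d \<ge> 1" and T: "T \<ge> 2"
  shows "2 * harm T + 32 * real d ^ 2 * 5 ^ d * ln (32 * real d * (real T + 1))
         \<le> 1700000 * real d * 6 ^ d * ln (real T)"
proof -
  define LT where "LT = ln (real T)"
  have T2: "real T \<ge> 2" using T by simp
  have l2: "ln (2::real) \<ge> 1/2" using ln_ge_1_minus_inv[of 2] by simp
  have LT2: "LT \<ge> ln 2" unfolding LT_def using T2 by simp
  have LTh: "LT \<ge> 1/2" using LT2 l2 by linarith
  have harm: "harm T \<le> LT + 1"
    using euler_mascheroni_sequence_decreasing[of 1 T] T unfolding LT_def by (simp add: harm_def)
  have h1: "2 * harm T \<le> 6 * LT" using harm LTh by linarith
  have dpos: "real d \<ge> 1" using d by simp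
  have ln_split: "ln (32 * real d * (real T + 1)) = ln 32 + ln (real d) + ln (real T + 1)"
    using dpos T2 by (simp add: ln_mult)
  have a1: "ln (32::real) \<le> 5 * LT"
  proof -
    have "ln (32::real) = ln (2 ^ 5)" by simp
    also have "\<dots> = 5 * ln 2" by (simp only: ln_realpow)
    finally show ?thesis using LT2 by linarith
  qed
  have a2: "ln (real d) \<le> 2 * real d * LT"
  proof -
    have "ln (real d) \<le> real d - 1" using dpos by (intro ln_le_minus_one) simp
    also have "\<dots> \<le> real d * (2 * LT)"
    proof -
      have "real d * 1 \<le> real d * (2 * LT)" using LTh dpos by (intro mult_left_mono) auto
      then show ?thesis by simp
    qed
    finally show ?thesis by simp
  qed
  have a3: "ln (real T + 1) \<le> 2 * LT"
  proof -
    have "real T * 2 \<le> real T * real T" using T2 by (intro mult_left_mono) auto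
    then have "real T + 1 \<le> real T ^ 2" unfolding power2_eq_square using T2 by linarith
    then have "ln (real T + 1) \<le> ln (real T ^ 2)" using T2 by simp
    also have "\<dots> = 2 * LT" unfolding LT_def using T2 by (simp add: ln_realpow)
    finally show ?thesis .
  qed
  have lnb: "ln (32 * real d * (real T + 1)) \<le> 9 * real d * LT"
  proof -
    have "1 * (7 * LT) \<le> real d * (7 * LT)" using dpos LTh by (intro mult_right_mono) auto
    then show ?thesis using ln_split a1 a2 a3 by simp
  qed
  have pos: "0 \<le> 32 * real d ^ 2 * 5 ^ d" by simp
  have "32 * real d ^ 2 * 5 ^ d * ln (32 * real d * (real T + 1)) \<le> 32 * real d ^ 2 * 5 ^ d * (9 * real d * LT)"
    using lnb pos by (rule mult_left_mono)
  also have "\<dots> = 288 * LT * real d * (real d ^ 2 * 5 ^ d)" by (simp add: algebra_simps)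
  finally have m1: "32 * real d ^ 2 * 5 ^ d * ln (32 * real d * (real T + 1)) \<le> 288 * LT * real d * (real d ^ 2 * 5 ^ d)" .
  have "real d ^ 2 * 5 ^ d \<le> 5832 * (6/5) ^ d * 5 ^ d" using d_sq_bound[of d] by (intro mult_right_mono) auto
  also have "\<dots> = 5832 * ((6/5::real) ^ d * 5 ^ d)" by simp
  also have "(6/5::real) ^ d * 5 ^ d = 6 ^ d" by (simp add: power_mult_distrib[symmetric])
  finally have m2: "real d ^ 2 * 5 ^ d \<le> 5832 * 6 ^ d" .
  have "288 * LT * real d * (real d ^ 2 * 5 ^ d) \<le> 288 * LT * real d * (5832 * 6 ^ d)"
    using m2 LTh dpos by (intro mult_left_mono) auto
  with m1 have h2: "32 * real d ^ 2 * 5 ^ d * ln (32 * real d * (real T + 1)) \<le> 288 * LT * real d * (5832 * 6 ^ d)"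
    by linarith
  have one: "1 \<le> real d * 6 ^ d" using dpos by (simp add: one_le_power order_trans[OF _ mult_right_mono[of 1 "real d"]])
  define X where "X = real d * 6 ^ d * LT"
  have X0: "X \<ge> 0" unfolding X_def using LTh by simp
  have "6 * LT * 1 \<le> 6 * LT * (real d * 6 ^ d)" using one LTh by (intro mult_left_mono) auto
  then have h1': "2 * harm T \<le> 6 * X" using h1 unfolding X_def by (simp add: algebra_simps)
  have h2': "32 * real d ^ 2 * 5 ^ d * ln (32 * real d * (real T + 1)) \<le> 1679616 * X"
    using h2 unfolding X_def by (simp add: algebra_simps)
  have "1700000 * real d * 6 ^ d * ln (real T) = 1700000 * X" unfolding X_def LT_def by simp
  then show ?thesis using h1' h2' X0 by linarith
qed

theorem theorem5p6:
  shows "\<exists>C::real. \<forall>d::nat. d \<ge> 1 \<longrightarrow>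
    (\<exists>A::learner. budget_balanced A \<and>
      (\<forall>s b x T. s \<in> unit_ball d \<longrightarrow> b \<in> unit_ball d \<longrightarrow> (\<forall>t. x t \<in> unit_ball d) \<longrightarrow>
         T \<ge> 2 \<longrightarrow> regret d A s b x T \<le> C * real d * 6 ^ d * ln (real T)))"
proof (rule exI[where x=1700000], intro allI impI)
  fix d :: nat assume d: "d \<ge> 1"
  show "\<exists>A::learner. budget_balanced A \<and>
      (\<forall>s b x T. s \<in> unit_ball d \<longrightarrow> b \<in> unit_ball d \<longrightarrow> (\<forall>t. x t \<in> unit_ball d) \<longrightarrow>
         T \<ge> 2 \<longrightarrow> regret d A s b x T \<le> 1700000 * real d * 6 ^ d * ln (real T))"
  proof (rule exI[where x="alg d"], intro conjI allI impI)
    show "budget_balanced (alg d)" by (rule alg_bb)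
    fix s b :: vec and x :: "nat \<Rightarrow> vec" and T :: nat assume s: "s \<in> unit_ball d" and b: "b \<in> unit_ball d" and x: "\<forall>t. x t \<in> unit_ball d" and T: "T \<ge> (2::nat)"
    have "regret d (alg d) s b x T \<le> 2 * harm T + 32 * real d ^ 2 * 5 ^ d * ln (32 * real d * (real T + 1))"
      using regret_bound[OF d s b] x by blast
    also have "\<dots> \<le> 1700000 * real d * 6 ^ d * ln (real T)" by (rule final_numeric[OF d T])
    finally show "regret d (alg d) s b x T \<le> 1700000 * real d * 6 ^ d * ln (real T)" .
  qed
qed

end
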